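(* There exists a universal constant $C<\infty$ such that the following holds. Let $(a_{ijk})_{i,j\le n,k\le m}$ be real numbers, $U\subset B_2^n$ and $S\subset\mathbb{R}^m$ nonempty bounded sets. Then for every $\varepsilon>0$, \[ N\Big(U\times S,d_A,8\varepsilon^2\mathbb{E}\beta_{A,S}(G_n) +2\varepsilon\sup_{x\in U}\beta_{A,S}(x)+8\varepsilon\sup_{t\in S}\mathbb{E}\alpha_A(G_n\otimes t)\Big) \leq \exp(C\varepsilon^{-2}), \] and for every $\delta>0$, \[ \sqrt{\log N(U\times S,d_A,\delta)}\leq C\Big(\delta^{-1}\big(\sup_{x\in U}\beta_{A,S}(x)+\sup_{t\in S}\mathbb{E}\alpha_A(G_n\otimes t)\big) +\delta^{-1/2}(\mathbb{E}\beta_{A,S}(G_n))^{1/2}\Big). \]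
   Context: $G_n$ is a standard Gaussian vector in $\mathbb{R}^n$, $g_1,\dots,g_n$ its coordinates; $B_2^n$ is the Euclidean unit ball. For $x\in\mathbb{R}^n,t\in\mathbb{R}^m$, $x\otimes t=(x_jt_k)_{j,k}\in\mathbb{R}^{nm}$; for $y\in\mathbb{R}^{nm}$, $\alpha_A(y)=\big(\sum_{i}(\sum_{j,k}a_{ijk}y_{jk})^2\big)^{1/2}$; $\beta_{A,S}(x)=\mathbb{E}\sup_{t\in S}|\sum_{i,j,k}a_{ijk}g_ix_jt_k|$. The (pseudo)metric is $d_A((x,t),(x',t'))=\alpha_A(x\otimes t-x'\otimes t')$. For a set $W$, metric $\rho$ and $\varepsilon>0$, $N(W,\rho,\varepsilon)$ is the smallest number of closed $\rho$-balls of diameter $\varepsilon$ covering $W$. *)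

theory Defs
  imports "HOL-Probability.Probability"
begin

text \<open>Vectors in R^n are functions nat => real whose relevant coordinates are those below n.
  Coefficients a_{ijk} are a function a :: nat => nat => nat => real, used for i,j < n, k < m.\<close>

definition gauss :: "nat \<Rightarrow> (nat \<Rightarrow> real) measure" where
  "gauss n = PiM {..<n} (\<lambda>_. density lborel std_normal_density)"

definition tensor :: "(nat \<Rightarrow> real) \<Rightarrow> (nat \<Rightarrow> real) \<Rightarrow> (nat \<Rightarrow> nat \<Rightarrow> real)" where
  "tensor x t = (\<lambda>j k. x j * t k)"

definition alphaA :: "(nat \<Rightarrow> nat \<Rightarrow> nat \<Rightarrow> real) \<Rightarrow> nat \<Rightarrow> nat \<Rightarrow> (nat \<Rightarrow> nat \<Rightarrow> real) \<Rightarrow> real" where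
  "alphaA a n m y = sqrt (\<Sum>i<n. (\<Sum>j<n. \<Sum>k<m. a i j k * y j k)\<^sup>2)"

definition betaAS :: "(nat \<Rightarrow> nat \<Rightarrow> nat \<Rightarrow> real) \<Rightarrow> nat \<Rightarrow> nat \<Rightarrow> (nat \<Rightarrow> real) set
    \<Rightarrow> (nat \<Rightarrow> real) \<Rightarrow> real" where
  "betaAS a n m S x = (\<integral>g. (SUP t\<in>S. \<bar>\<Sum>i<n. \<Sum>j<n. \<Sum>k<m. a i j k * g i * x j * t k\<bar>) \<partial>gauss n)"

definition dA :: "(nat \<Rightarrow> nat \<Rightarrow> nat \<Rightarrow> real) \<Rightarrow> nat \<Rightarrow> nat \<Rightarrow>
    (nat \<Rightarrow> real) \<times> (nat \<Rightarrow> real) \<Rightarrow> (nat \<Rightarrow> real) \<times> (nat \<Rightarrow> real) \<Rightarrow> real" where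
  "dA a n m p q = alphaA a n m (\<lambda>j k. tensor (fst p) (snd p) j k - tensor (fst q) (snd q) j k)"

text \<open>N(W,rho,eps): smallest number of closed rho-balls of diameter eps (i.e. radius eps/2)
  covering W; infinity if there is no finite cover.\<close>
definition covering_number :: "'a set \<Rightarrow> ('a \<Rightarrow> 'a \<Rightarrow> real) \<Rightarrow> real \<Rightarrow> enat" where
  "covering_number W \<rho> \<epsilon> =
     Inf {enat (card F) | F. finite F \<and> W \<subseteq> (\<Union>c\<in>F. {w. \<rho> c w \<le> \<epsilon> / 2})}"

definition unit_ball :: "nat \<Rightarrow> (nat \<Rightarrow> real) set" where
  "unit_ball n = {x. (\<forall>j\<ge>n. x j = 0) \<and> (\<Sum>j<n. (x j)\<^sup>2) \<le> 1}"

definition bounded_in :: "nat \<Rightarrow> (nat \<Rightarrow> real) set \<Rightarrow> bool" where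
  "bounded_in m S \<longleftrightarrow> (\<forall>t\<in>S. \<forall>k\<ge>m. t k = 0) \<and> (\<exists>R. \<forall>t\<in>S. (\<Sum>k<m. (t k)\<^sup>2) \<le> R)"

end

theory Submission
  imports Defs
begin

definition gshift :: "nat \<Rightarrow> (nat \<Rightarrow> real) \<Rightarrow> (nat \<Rightarrow> real) \<Rightarrow> (nat \<Rightarrow> real)" where
  "gshift n a g = (\<lambda>i\<in>{..<n}. g i + a i)"

definition gneg :: "nat \<Rightarrow> (nat \<Rightarrow> real) \<Rightarrow> (nat \<Rightarrow> real)" where
  "gneg n g = (\<lambda>i\<in>{..<n}. - g i)"

definition rho :: "nat \<Rightarrow> (nat \<Rightarrow> real) \<Rightarrow> (nat \<Rightarrow> real) \<Rightarrow> real" where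
  "rho n a y = (\<Prod>i<n. exp (y i * a i - (a i)\<^sup>2 / 2))"

lemma prob_space_std: "prob_space (density lborel std_normal_density)"
  by (rule prob_space_normal_density) simp

lemma prob_space_gauss: "prob_space (gauss n)"
  unfolding gauss_def using prob_space_std by (intro prob_space_PiM) auto

lemma psf_std: "product_sigma_finite (\<lambda>_::nat. density lborel std_normal_density)"
  unfolding product_sigma_finite_def
  using prob_space_imp_sigma_finite[OF prob_space_std] by auto

lemma space_gauss: "space (gauss n) = PiE {..<n} (\<lambda>_. UNIV)"
  unfolding gauss_def by (simp add: space_PiM)

lemma sets_gauss: "sets (gauss n) = sets (PiM {..<n} (\<lambda>_. lborel))"
  unfolding gauss_def by (intro sets_PiM_cong) auto

lemma measurable_gauss_coord[measurable]: "i < n \<Longrightarrow> (\<lambda>g. g i) \<in> borel_measurable (gauss n)"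
proof -
  assume "i < n"
  then have "(\<lambda>g. g i) \<in> measurable (gauss n) (density lborel std_normal_density)"
    unfolding gauss_def by (intro measurable_component_singleton) simp
  then show ?thesis by (simp add: measurable_cong_sets[OF refl sets_density])
qed

lemma gauss_unfold_target: "measurable M (gauss n) = measurable M (PiM {..<n} (\<lambda>_. density lborel std_normal_density))"
  unfolding gauss_def ..

lemma gshift_measurable[measurable]: "gshift n a \<in> measurable (gauss n) (gauss n)"
  unfolding gshift_def gauss_unfold_target
  by (rule measurable_restrict) (simp add: measurable_cong_sets[OF refl sets_density])

lemma gneg_measurable[measurable]: "gneg n \<in> measurable (gauss n) (gauss n)"
  unfolding gneg_def gauss_unfold_target
  by (rule measurable_restrict) (simp add: measurable_cong_sets[OF refl sets_density])

lemma normal_shift_emeasure: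
  assumes A: "A \<in> sets borel"
  shows "emeasure (density lborel std_normal_density) ((\<lambda>y. y + c) -` A)
       = emeasure (density lborel (normal_density c 1)) A"
proof -
  have "(\<lambda>y::real. y + c) \<in> borel_measurable borel" by simp
  from measurable_sets_borel[OF this A] have pre: "(\<lambda>y. y + c) -` A \<in> sets borel" by simp
  have "emeasure (density lborel std_normal_density) ((\<lambda>y. y + c) -` A)
      = (\<integral>\<^sup>+ y. ennreal (std_normal_density y) * indicator ((\<lambda>y. y + c) -` A) y \<partial>lborel)"
    using pre by (subst emeasure_density) auto
  also have "\<dots> = (\<integral>\<^sup>+ y. ennreal (normal_density c 1 (c + y)) * indicator A (c + y) \<partial>lborel)"
    by (intro nn_integral_cong) (auto simp: normal_density_def indicator_def add.commute)
  also have "\<dots> = (\<integral>\<^sup>+ z. ennreal (normal_density c 1 z) * indicator A z \<partial>(distr lborel borel ((+) c)))"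
    using A by (subst nn_integral_distr) auto
  also have "\<dots> = (\<integral>\<^sup>+ z. ennreal (normal_density c 1 z) * indicator A z \<partial>lborel)"
    by (simp add: lborel_distr_plus)
  also have "\<dots> = emeasure (density lborel (normal_density c 1)) A"
    using A by (subst emeasure_density) auto
  finally show ?thesis .
qed

lemma normal_density_mult:
  "std_normal_density x * exp (x * c - c\<^sup>2 / 2) = normal_density c 1 x"
proof -
  have "exp (- x\<^sup>2 / 2) * exp (x * c - c\<^sup>2 / 2) = exp (- (x - c)\<^sup>2 / 2)"
    by (subst exp_add[symmetric]) (simp add: power2_eq_square algebra_simps)
  then show ?thesis unfolding normal_density_def by simp
qed

lemma gauss_shift_distr:
  "distr (gauss n) (gauss n) (gshift n a) = density (gauss n) (\<lambda>y. ennreal (rho n a y))"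
proof -
  define N where "N = (\<lambda>i. density lborel (normal_density (a i) 1))"
  interpret N: product_sigma_finite N
    unfolding product_sigma_finite_def N_def
    using prob_space_imp_sigma_finite[OF prob_space_normal_density] by auto
  interpret S: product_sigma_finite "\<lambda>_::nat. density lborel std_normal_density"
    by (rule psf_std)
  have setsN: "sets (PiM {..<n} N) = sets (gauss n)"
    unfolding gauss_def N_def by (intro sets_PiM_cong) auto
  have 1: "distr (gauss n) (gauss n) (gshift n a) = PiM {..<n} N"
  proof (rule N.PiM_eqI)
    show "sets (distr (gauss n) (gauss n) (gshift n a)) = sets (PiM {..<n} N)"
      using setsN by simp
  next
    fix A assume A: "\<And>i. i \<in> {..<n} \<Longrightarrow> A i \<in> sets (N i)"
    then have Ab: "\<And>i. i < n \<Longrightarrow> A i \<in> sets borel" by (auto simp: N_def)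
    have pre: "gshift n a -` PiE {..<n} A \<inter> space (gauss n) = PiE {..<n} (\<lambda>i. (\<lambda>y. y + a i) -` A i)"
      by (auto simp: gshift_def space_gauss PiE_iff extensional_def)
    have "emeasure (distr (gauss n) (gauss n) (gshift n a)) (PiE {..<n} A)
        = emeasure (gauss n) (gshift n a -` PiE {..<n} A \<inter> space (gauss n))"
      using A setsN by (intro emeasure_distr) (auto simp: N_def)
    also have "\<dots> = emeasure (gauss n) (PiE {..<n} (\<lambda>i. (\<lambda>y. y + a i) -` A i))"
      using pre by simp
    also have "\<dots> = (\<Prod>i<n. emeasure (density lborel std_normal_density) ((\<lambda>y. y + a i) -` A i))"
    proof -
      have "(\<lambda>y::real. y + c) \<in> borel_measurable borel" for c by simp
      from measurable_sets_borel[OF this Ab]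
      have pm: "\<And>i. i < n \<Longrightarrow> (\<lambda>y. y + a i) -` A i \<in> sets borel" by simp
      show ?thesis unfolding gauss_def using pm
        by (subst S.emeasure_PiM) auto
    qed
    also have "\<dots> = (\<Prod>i<n. emeasure (N i) (A i))"
      using Ab by (intro prod.cong) (auto simp: N_def normal_shift_emeasure)
    finally show "emeasure (distr (gauss n) (gauss n) (gshift n a)) (PiE {..<n} A) = (\<Prod>i\<in>{..<n}. emeasure (N i) (A i))"
      by simp
  qed simp
  have 2: "density (gauss n) (\<lambda>y. ennreal (rho n a y)) = PiM {..<n} N"
  proof (rule N.PiM_eqI)
    show "sets (density (gauss n) (\<lambda>y. ennreal (rho n a y))) = sets (PiM {..<n} N)"
      using setsN by simp
  next
    fix A assume A: "\<And>i. i \<in> {..<n} \<Longrightarrow> A i \<in> sets (N i)"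
    then have Ab[measurable]: "\<And>i. i < n \<Longrightarrow> A i \<in> sets borel" by (auto simp: N_def)
    have PA: "PiE {..<n} A \<in> sets (gauss n)"
      unfolding gauss_def using Ab by (intro sets_PiM_I_finite) auto
    have rm: "(\<lambda>y. ennreal (rho n a y)) \<in> borel_measurable (gauss n)"
      unfolding rho_def by measurable
    have "emeasure (density (gauss n) (\<lambda>y. ennreal (rho n a y))) (PiE {..<n} A)
        = (\<integral>\<^sup>+ y. ennreal (rho n a y) * indicator (PiE {..<n} A) y \<partial>gauss n)"
      using PA rm by (subst emeasure_density) auto
    also have "\<dots> = (\<integral>\<^sup>+ y. (\<Prod>i<n. ennreal (exp (y i * a i - (a i)\<^sup>2 / 2)) * indicator (A i) (y i)) \<partial>gauss n)"
    proof (intro nn_integral_cong)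
      fix y assume "y \<in> space (gauss n)"
      then have ye: "y \<in> extensional {..<n}" by (simp add: space_gauss PiE_def)
      have ind: "indicator (PiE {..<n} A) y = (\<Prod>i<n. indicator (A i) (y i) :: ennreal)"
        using ye by (auto simp: indicator_def PiE_iff prod_zero_iff)
      show "ennreal (rho n a y) * indicator (PiE {..<n} A) y = (\<Prod>i<n. ennreal (exp (y i * a i - (a i)\<^sup>2 / 2)) * indicator (A i) (y i))"
        unfolding ind rho_def prod.distrib by (simp add: prod_ennreal)
    qed
    also have "\<dots> = (\<Prod>i<n. \<integral>\<^sup>+ x. ennreal (exp (x * a i - (a i)\<^sup>2 / 2)) * indicator (A i) x \<partial>density lborel std_normal_density)"
      unfolding gauss_def using Ab by (intro S.product_nn_integral_prod) auto
    also have "\<dots> = (\<Prod>i<n. emeasure (N i) (A i))"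
    proof (intro prod.cong refl)
      fix i assume i: "i \<in> {..<n}"
      have "(\<integral>\<^sup>+ x. ennreal (exp (x * a i - (a i)\<^sup>2 / 2)) * indicator (A i) x \<partial>density lborel std_normal_density)
          = (\<integral>\<^sup>+ x. ennreal (std_normal_density x) * (ennreal (exp (x * a i - (a i)\<^sup>2 / 2)) * indicator (A i) x) \<partial>lborel)"
        using i Ab by (subst nn_integral_density) auto
      also have "\<dots> = (\<integral>\<^sup>+ x. ennreal (normal_density (a i) 1 x) * indicator (A i) x \<partial>lborel)"
      proof (intro nn_integral_cong)
        fix x :: real
        have "ennreal (std_normal_density x) * (ennreal (exp (x * a i - (a i)\<^sup>2 / 2)) * indicator (A i) x)
            = ennreal (std_normal_density x * exp (x * a i - (a i)\<^sup>2 / 2)) * indicator (A i) x"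
          by (subst ennreal_mult) (auto simp: normal_density_nonneg mult.assoc)
        then show "ennreal (std_normal_density x) * (ennreal (exp (x * a i - (a i)\<^sup>2 / 2)) * indicator (A i) x)
            = ennreal (normal_density (a i) 1 x) * indicator (A i) x"
          by (simp only: normal_density_mult)
      qed
      also have "\<dots> = emeasure (N i) (A i)"
        using i Ab unfolding N_def by (subst emeasure_density) auto
      finally show "(\<integral>\<^sup>+ x. ennreal (exp (x * a i - (a i)\<^sup>2 / 2)) * indicator (A i) x \<partial>density lborel std_normal_density) = emeasure (N i) (A i)" .
    qed
    finally show "emeasure (density (gauss n) (\<lambda>y. ennreal (rho n a y))) (PiE {..<n} A) = (\<Prod>i\<in>{..<n}. emeasure (N i) (A i))"
      by simp
  qed simp
  show ?thesis using 1 2 by simp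
qed

lemma std_even: "std_normal_density (- y) = std_normal_density y"
  by (simp add: normal_density_def)

lemma std_distr_uminus:
  "distr (density lborel std_normal_density) (density lborel std_normal_density) uminus
   = density lborel std_normal_density"
proof (rule measure_eqI)
  fix A assume "A \<in> sets (distr (density lborel std_normal_density) (density lborel std_normal_density) uminus)"
  then have A[measurable]: "A \<in> sets borel" by simp
  have "(\<lambda>y::real. - y) \<in> borel_measurable borel" by simp
  from measurable_sets_borel[OF this A] have pre: "uminus -` A \<in> sets borel" by simp
  have "emeasure (distr (density lborel std_normal_density) (density lborel std_normal_density) uminus) A
      = emeasure (density lborel std_normal_density) (uminus -` A)"
    by (subst emeasure_distr) auto
  also have "\<dots> = (\<integral>\<^sup>+ y. ennreal (std_normal_density y) * indicator (uminus -` A) y \<partial>lborel)"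
    using pre by (subst emeasure_density) auto
  also have "\<dots> = (\<integral>\<^sup>+ y. ennreal (std_normal_density (- y)) * indicator A (- y) \<partial>lborel)"
    by (intro nn_integral_cong) (simp add: std_even indicator_def)
  also have "\<dots> = (\<integral>\<^sup>+ z. ennreal (std_normal_density z) * indicator A z \<partial>(distr lborel borel uminus))"
    by (subst nn_integral_distr) auto
  also have "\<dots> = emeasure (density lborel std_normal_density) A"
    by (simp add: lborel_distr_uminus emeasure_density)
  finally show "emeasure (distr (density lborel std_normal_density) (density lborel std_normal_density) uminus) A
      = emeasure (density lborel std_normal_density) A" .
qed simp

lemma gauss_neg_distr: "distr (gauss n) (gauss n) (gneg n) = gauss n"
proof -
  have "distr (gauss n) (gauss n) (compose {..<n} uminus) = PiM {..<n} (\<lambda>i. distr (density lborel std_normal_density) (density lborel std_normal_density) uminus)"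
    unfolding gauss_def using prob_space_std
    by (intro distr_PiM_finite_prob_space') auto
  moreover have "compose {..<n} uminus = gneg n"
    by (auto simp: compose_def gneg_def fun_eq_iff)
  ultimately show ?thesis by (simp add: std_distr_uminus gauss_def)
qed

lemma gneg_space: "g \<in> space (gauss n) \<Longrightarrow> gneg n g \<in> space (gauss n)"
  by (simp add: space_gauss gneg_def)

lemma gshift_space: "gshift n a g \<in> space (gauss n)"
  by (simp add: space_gauss gshift_def)

lemma exp_sym_ge: "2 \<le> exp s + exp (- s :: real)"
  using exp_ge_add_one_self[of s] exp_ge_add_one_self[of "-s"] by linarith


lemma gauss_shift_ineq:
  assumes W[measurable]: "W \<in> sets (gauss n)"
    and sym: "\<And>g. g \<in> space (gauss n) \<Longrightarrow> gneg n g \<in> W \<longleftrightarrow> g \<in> W"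
  shows "measure (gauss n) {g \<in> space (gauss n). gshift n a g \<in> W}
         \<ge> exp (- (\<Sum>i<n. (a i)\<^sup>2) / 2) * measure (gauss n) W"
proof -
  interpret G: prob_space "gauss n" by (rule prob_space_gauss)
  define q where "q = (\<Sum>i<n. (a i)\<^sup>2) / 2"
  have rm[measurable]: "(\<lambda>y. rho n a y) \<in> borel_measurable (gauss n)"
    unfolding rho_def by measurable
  have rho_eq: "rho n a y = exp ((\<Sum>i<n. y i * a i) - q)" for y
    unfolding rho_def q_def by (simp add: exp_sum[symmetric] sum_subtractf sum_divide_distrib)
  have sneg: "(\<Sum>i<n. gneg n y i * a i) = - (\<Sum>i<n. y i * a i)" for y
  proof -
    have "(\<Sum>i<n. gneg n y i * a i) = (\<Sum>i<n. - (y i * a i))"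
      by (rule sum.cong) (auto simp: gneg_def)
    then show ?thesis by (simp add: sum_negf)
  qed
  have setW: "{g \<in> space (gauss n). gshift n a g \<in> W} = gshift n a -` W \<inter> space (gauss n)" by auto
  have e1: "emeasure (gauss n) {g \<in> space (gauss n). gshift n a g \<in> W}
        = (\<integral>\<^sup>+ y. ennreal (rho n a y) * indicator W y \<partial>gauss n)"
  proof -
    have "emeasure (gauss n) {g \<in> space (gauss n). gshift n a g \<in> W} = emeasure (distr (gauss n) (gauss n) (gshift n a)) W"
      unfolding setW by (subst emeasure_distr) auto
    also have "\<dots> = (\<integral>\<^sup>+ y. ennreal (rho n a y) * indicator W y \<partial>gauss n)"
      unfolding gauss_shift_distr by (subst emeasure_density) auto
    finally show ?thesis .
  qed
  have e2: "(\<integral>\<^sup>+ y. ennreal (rho n a (gneg n y)) * indicator W y \<partial>gauss n)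
        = (\<integral>\<^sup>+ y. ennreal (rho n a y) * indicator W y \<partial>gauss n)"
  proof -
    have "(\<integral>\<^sup>+ y. ennreal (rho n a (gneg n y)) * indicator W y \<partial>gauss n)
        = (\<integral>\<^sup>+ y. ennreal (rho n a (gneg n y)) * indicator W (gneg n y) \<partial>gauss n)"
      by (intro nn_integral_cong) (auto simp: indicator_def sym)
    also have "\<dots> = (\<integral>\<^sup>+ y. ennreal (rho n a y) * indicator W y \<partial>distr (gauss n) (gauss n) (gneg n))"
      by (subst nn_integral_distr) auto
    finally show ?thesis by (simp add: gauss_neg_distr)
  qed
  have "(\<integral>\<^sup>+ y. ennreal (2 * exp (- q)) * indicator W y \<partial>gauss n)
      \<le> (\<integral>\<^sup>+ y. (ennreal (rho n a y) * indicator W y + ennreal (rho n a (gneg n y)) * indicator W y) \<partial>gauss n)"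
  proof (intro nn_integral_mono)
    fix y assume y: "y \<in> space (gauss n)"
    have "2 * exp (- q) \<le> rho n a y + rho n a (gneg n y)"
    proof -
      have "2 * exp (- q) \<le> (exp (\<Sum>i<n. y i * a i) + exp (- (\<Sum>i<n. y i * a i))) * exp (- q)"
        using exp_sym_ge by (intro mult_right_mono) auto
      also have "\<dots> = rho n a y + rho n a (gneg n y)"
        unfolding rho_eq sneg by (simp add: distrib_right exp_add[symmetric])
      finally show ?thesis .
    qed
    then have "ennreal (2 * exp (- q)) \<le> ennreal (rho n a y) + ennreal (rho n a (gneg n y))"
      by (simp add: ennreal_plus[symmetric] rho_def prod_nonneg del: ennreal_plus)
    then show "ennreal (2 * exp (- q)) * indicator W y \<le> ennreal (rho n a y) * indicator W y + ennreal (rho n a (gneg n y)) * indicator W y"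
      by (auto simp: indicator_def)
  qed
  also have "\<dots> = 2 * (\<integral>\<^sup>+ y. ennreal (rho n a y) * indicator W y \<partial>gauss n)"
    by (subst nn_integral_add) (auto simp: e2 mult_2)
  finally have "ennreal (2 * exp (- q)) * emeasure (gauss n) W \<le> 2 * emeasure (gauss n) {g \<in> space (gauss n). gshift n a g \<in> W}"
    unfolding e1 by (subst (asm) nn_integral_cmult_indicator) auto
  then have "2 * (ennreal (exp (- q)) * emeasure (gauss n) W) \<le> 2 * emeasure (gauss n) {g \<in> space (gauss n). gshift n a g \<in> W}"
    by (simp add: ennreal_mult mult.assoc)
  then have "ennreal (exp (- q)) * emeasure (gauss n) W \<le> emeasure (gauss n) {g \<in> space (gauss n). gshift n a g \<in> W}"
    by (subst (asm) ennreal_mult_le_mult_iff) auto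
  then have "ennreal (exp (- q) * measure (gauss n) W) \<le> ennreal (measure (gauss n) {g \<in> space (gauss n). gshift n a g \<in> W})"
    by (simp add: G.emeasure_eq_measure ennreal_mult)
  then show ?thesis by (simp add: q_def)
qed


definition ip :: "nat \<Rightarrow> (nat \<Rightarrow> real) \<Rightarrow> (nat \<Rightarrow> real) \<Rightarrow> real" where
  "ip n z v = (\<Sum>i<n. z i * v i)"

definition nrm :: "nat \<Rightarrow> (nat \<Rightarrow> real) \<Rightarrow> real" where
  "nrm n v = sqrt (\<Sum>i<n. (v i)\<^sup>2)"

definition ext0 :: "nat \<Rightarrow> (nat \<Rightarrow> real) \<Rightarrow> (nat \<Rightarrow> real)" where
  "ext0 n x = (\<lambda>i. if i < n then x i else 0)"

lemma ext0_measurable: "ext0 n \<in> borel_measurable (gauss n)"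
proof (rule measurable_coordinatewise_then_product)
  fix i
  show "(\<lambda>x. ext0 n x i) \<in> borel_measurable (gauss n)"
    by (cases "i < n") (simp_all add: ext0_def)
qed

lemma lip_continuous:
  fixes f :: "(nat \<Rightarrow> real) \<Rightarrow> real"
  assumes lip: "\<And>x y. \<bar>f x - f y\<bar> \<le> K * (\<Sum>i<n. \<bar>x i - y i\<bar>)"
  shows "continuous_on UNIV f"
proof -
  have "isCont f y" for y
  proof -
    have c: "continuous_on UNIV (\<lambda>x. K * (\<Sum>i<n. \<bar>x i - y i\<bar>))"
      by (auto intro!: continuous_intros)
    then have "((\<lambda>x. K * (\<Sum>i<n. \<bar>x i - y i\<bar>)) \<longlongrightarrow> K * (\<Sum>i<n. \<bar>y i - y i\<bar>)) (at y)"
      using continuous_on_def[THEN iffD1, OF c, rule_format, of y] by simp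
    then have t: "((\<lambda>x. K * (\<Sum>i<n. \<bar>x i - y i\<bar>)) \<longlongrightarrow> 0) (at y)" by simp
    have "((\<lambda>x. f x - f y) \<longlongrightarrow> 0) (at y)"
      by (rule Lim_null_comparison[OF _ t]) (simp add: lip)
    then show ?thesis
      unfolding isCont_def by (simp add: LIM_zero_iff)
  qed
  then show ?thesis by (simp add: continuous_at_imp_continuous_on)
qed

lemma lip_measurable:
  fixes f :: "(nat \<Rightarrow> real) \<Rightarrow> real"
  assumes lip: "\<And>x y. \<bar>f x - f y\<bar> \<le> K * (\<Sum>i<n. \<bar>x i - y i\<bar>)"
  shows "f \<in> borel_measurable (gauss n)"
proof -
  have fb: "f \<in> borel_measurable borel"
    using lip_continuous[OF lip] by (rule borel_measurable_continuous_onI)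
  have "(\<lambda>x. f (ext0 n x)) \<in> borel_measurable (gauss n)"
    using measurable_comp[OF ext0_measurable fb] by (simp add: comp_def)
  moreover have "f (ext0 n x) = f x" for x
    using lip[of "ext0 n x" x] by (simp add: ext0_def)
  ultimately show ?thesis by simp
qed


definition Bv :: "(nat \<Rightarrow> nat \<Rightarrow> nat \<Rightarrow> real) \<Rightarrow> nat \<Rightarrow> nat \<Rightarrow> (nat \<Rightarrow> real) \<Rightarrow> (nat \<Rightarrow> real) \<Rightarrow> (nat \<Rightarrow> real)" where
  "Bv a n m x t = (\<lambda>i. \<Sum>j<n. \<Sum>k<m. a i j k * x j * t k)"

definition Fs :: "(nat \<Rightarrow> nat \<Rightarrow> nat \<Rightarrow> real) \<Rightarrow> nat \<Rightarrow> nat \<Rightarrow> (nat \<Rightarrow> real) set \<Rightarrow> (nat \<Rightarrow> real) \<Rightarrow> (nat \<Rightarrow> real) \<Rightarrow> real" where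
  "Fs a n m S x g = (SUP t\<in>S. \<bar>ip n g (Bv a n m x t)\<bar>)"

definition Ab :: "(nat \<Rightarrow> nat \<Rightarrow> nat \<Rightarrow> real) \<Rightarrow> nat \<Rightarrow> nat \<Rightarrow> real" where
  "Ab a n m = (\<Sum>i<n. \<Sum>j<n. \<Sum>k<m. \<bar>a i j k\<bar>)"

definition sa :: "nat \<Rightarrow> (nat \<Rightarrow> real) \<Rightarrow> real" where
  "sa n x = (\<Sum>j<n. \<bar>x j\<bar>)"

lemma sa_nonneg: "0 \<le> sa n x" unfolding sa_def by (simp add: sum_nonneg)
lemma Ab_nonneg: "0 \<le> Ab a n m" unfolding Ab_def by (simp add: sum_nonneg)
lemma le_sa: "i < n \<Longrightarrow> \<bar>x i\<bar> \<le> sa n x"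
  unfolding sa_def by (rule member_le_sum) auto

lemma ip_Bv: "ip n g (Bv a n m x t) = (\<Sum>i<n. \<Sum>j<n. \<Sum>k<m. a i j k * g i * x j * t k)"
  unfolding ip_def Bv_def by (simp add: sum_distrib_left mult_ac)

lemma betaAS_eq: "betaAS a n m S x = (\<integral>g. Fs a n m S x g \<partial>gauss n)"
  unfolding betaAS_def Fs_def ip_Bv ..

lemma alphaA_eq: "alphaA a n m (tensor x t) = nrm n (Bv a n m x t)"
  unfolding alphaA_def tensor_def nrm_def Bv_def by (simp add: mult.assoc)

lemma dA_eq: "dA a n m (x, t) (x', t') = nrm n (\<lambda>i. Bv a n m x t i - Bv a n m x' t' i)"
  unfolding dA_def alphaA_def tensor_def nrm_def Bv_def
  by (simp add: right_diff_distrib sum_subtractf mult.assoc)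

lemma triple_sum_bound:
  assumes "\<And>i j k. i < n \<Longrightarrow> j < n \<Longrightarrow> k < m \<Longrightarrow> \<bar>f i j k\<bar> \<le> \<bar>a i j k\<bar> * c"
  shows "\<bar>\<Sum>i<n. \<Sum>j<n. \<Sum>k<m. f i j k\<bar> \<le> Ab a n m * c"
proof -
  have "\<bar>\<Sum>i<n. \<Sum>j<n. \<Sum>k<m. f i j k\<bar> \<le> (\<Sum>i<n. \<bar>\<Sum>j<n. \<Sum>k<m. f i j k\<bar>)"
    by (rule sum_abs)
  also have "\<dots> \<le> (\<Sum>i<n. \<Sum>j<n. \<bar>\<Sum>k<m. f i j k\<bar>)"
    by (intro sum_mono sum_abs)
  also have "\<dots> \<le> (\<Sum>i<n. \<Sum>j<n. \<Sum>k<m. \<bar>f i j k\<bar>)"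
    by (intro sum_mono sum_abs)
  also have "\<dots> \<le> (\<Sum>i<n. \<Sum>j<n. \<Sum>k<m. \<bar>a i j k\<bar> * c)"
    by (intro sum_mono assms) auto
  also have "\<dots> = Ab a n m * c"
    unfolding Ab_def by (simp add: sum_distrib_right)
  finally show ?thesis .
qed

lemma prod4_le:
  fixes a g x t :: real
  assumes "\<bar>g\<bar> \<le> G" "\<bar>x\<bar> \<le> X" "\<bar>t\<bar> \<le> T"
  shows "\<bar>a * g * x * t\<bar> \<le> \<bar>a\<bar> * (G * X * T)"
proof -
  have "\<bar>g\<bar> * \<bar>x\<bar> * \<bar>t\<bar> \<le> G * X * T"
    using assms by (intro mult_mono) auto
  then show ?thesis
    by (simp add: abs_mult mult.assoc mult_left_mono)
qed

lemma bil_bound: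
  assumes "\<And>k. k < m \<Longrightarrow> \<bar>t k\<bar> \<le> Tb"
  shows "\<bar>ip n g (Bv a n m x t)\<bar> \<le> Ab a n m * (sa n g * sa n x * Tb)"
  unfolding ip_Bv by (intro triple_sum_bound prod4_le le_sa assms)

lemma ip_diff_left: "ip n g v - ip n g' v = ip n (\<lambda>i. g i - g' i) v"
  unfolding ip_def by (simp add: sum_subtractf left_diff_distrib)

lemma ip_Bv_diff_x: "ip n g (Bv a n m x t) - ip n g (Bv a n m x' t) = ip n g (Bv a n m (\<lambda>j. x j - x' j) t)"
  unfolding ip_Bv by (simp add: sum_subtractf[symmetric] algebra_simps)

lemma sup_lip:
  fixes f1 f2 :: "'a \<Rightarrow> real"
  assumes "S \<noteq> {}" "bdd_above (f1 ` S)" "bdd_above (f2 ` S)" "\<And>t. t \<in> S \<Longrightarrow> \<bar>f1 t - f2 t\<bar> \<le> c"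
  shows "\<bar>(SUP t\<in>S. f1 t) - (SUP t\<in>S. f2 t)\<bar> \<le> c"
proof -
  have "(SUP t\<in>S. f1 t) \<le> (SUP t\<in>S. f2 t) + c"
  proof (rule cSUP_least[OF assms(1)])
    fix t assume t: "t \<in> S"
    have "f2 t \<le> (SUP t\<in>S. f2 t)" by (rule cSUP_upper[OF t assms(3)])
    then show "f1 t \<le> (SUP t\<in>S. f2 t) + c" using assms(4)[OF t] by linarith
  qed
  moreover have "(SUP t\<in>S. f2 t) \<le> (SUP t\<in>S. f1 t) + c"
  proof (rule cSUP_least[OF assms(1)])
    fix t assume t: "t \<in> S"
    have "f1 t \<le> (SUP t\<in>S. f1 t)" by (rule cSUP_upper[OF t assms(2)])
    then show "f2 t \<le> (SUP t\<in>S. f1 t) + c" using assms(4)[OF t] by linarith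
  qed
  ultimately show ?thesis by linarith
qed

locale bnd =
  fixes a :: "nat \<Rightarrow> nat \<Rightarrow> nat \<Rightarrow> real" and n m :: nat and S :: "(nat \<Rightarrow> real) set" and Tb :: real
  assumes S_ne: "S \<noteq> {}" and Tb: "\<And>t k. t \<in> S \<Longrightarrow> k < m \<Longrightarrow> \<bar>t k\<bar> \<le> Tb"
begin

abbreviation "F \<equiv> Fs a n m S"
abbreviation "AB \<equiv> Ab a n m"

lemma bil_S: "t \<in> S \<Longrightarrow> \<bar>ip n g (Bv a n m x t)\<bar> \<le> AB * (sa n g * sa n x * Tb)"
  using Tb by (intro bil_bound) auto

lemma Fs_bdd: "bdd_above ((\<lambda>t. \<bar>ip n g (Bv a n m x t)\<bar>) ` S)"
  using bil_S by (intro bdd_aboveI2) blast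

lemma Fs_ge: "t \<in> S \<Longrightarrow> \<bar>ip n g (Bv a n m x t)\<bar> \<le> F x g"
  unfolding Fs_def by (rule cSUP_upper[OF _ Fs_bdd])

lemma Fs_nonneg: "0 \<le> F x g"
proof -
  obtain t where "t \<in> S" using S_ne by auto
  then show ?thesis using Fs_ge[of t g x] by linarith
qed

lemma Fs_le: "F x g \<le> AB * (sa n g * sa n x * Tb)"
  unfolding Fs_def by (rule cSUP_least[OF S_ne]) (rule bil_S)

lemma Tb_nonneg: "m > 0 \<Longrightarrow> 0 \<le> Tb"
  using S_ne Tb by fastforce

lemma Fs_lip_g: "\<bar>F x g - F x g'\<bar> \<le> (AB * (sa n x * Tb)) * (\<Sum>i<n. \<bar>g i - g' i\<bar>)"
  unfolding Fs_def
proof (rule sup_lip[OF S_ne Fs_bdd Fs_bdd])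
  fix t assume t: "t \<in> S"
  have "\<bar>\<bar>ip n g (Bv a n m x t)\<bar> - \<bar>ip n g' (Bv a n m x t)\<bar>\<bar> \<le> \<bar>ip n g (Bv a n m x t) - ip n g' (Bv a n m x t)\<bar>"
    by (rule abs_triangle_ineq3)
  also have "\<dots> = \<bar>ip n (\<lambda>i. g i - g' i) (Bv a n m x t)\<bar>" by (simp add: ip_diff_left)
  also have "\<dots> \<le> AB * (sa n (\<lambda>i. g i - g' i) * sa n x * Tb)"
    using bil_S[OF t] by blast
  finally show "\<bar>\<bar>ip n g (Bv a n m x t)\<bar> - \<bar>ip n g' (Bv a n m x t)\<bar>\<bar> \<le> AB * (sa n x * Tb) * (\<Sum>i<n. \<bar>g i - g' i\<bar>)"
    by (simp add: sa_def mult_ac)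
qed

lemma Fs_lip_x: "\<bar>F x g - F x' g\<bar> \<le> (AB * (sa n g * Tb)) * (\<Sum>j<n. \<bar>x j - x' j\<bar>)"
  unfolding Fs_def
proof (rule sup_lip[OF S_ne Fs_bdd Fs_bdd])
  fix t assume t: "t \<in> S"
  have "\<bar>\<bar>ip n g (Bv a n m x t)\<bar> - \<bar>ip n g (Bv a n m x' t)\<bar>\<bar> \<le> \<bar>ip n g (Bv a n m x t) - ip n g (Bv a n m x' t)\<bar>"
    by (rule abs_triangle_ineq3)
  also have "\<dots> = \<bar>ip n g (Bv a n m (\<lambda>j. x j - x' j) t)\<bar>" by (simp add: ip_Bv_diff_x)
  also have "\<dots> \<le> AB * (sa n g * sa n (\<lambda>j. x j - x' j) * Tb)"
    using bil_S[OF t] by blast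
  finally show "\<bar>\<bar>ip n g (Bv a n m x t)\<bar> - \<bar>ip n g (Bv a n m x' t)\<bar>\<bar> \<le> AB * (sa n g * Tb) * (\<Sum>j<n. \<bar>x j - x' j\<bar>)"
    by (simp add: sa_def mult_ac)
qed

lemma Fs_comb:
  assumes "\<And>j. j < n \<Longrightarrow> u j = v j + s * z j"
  shows "F u g \<le> F v g + \<bar>s\<bar> * F z g"
  unfolding Fs_def
proof (rule cSUP_least[OF S_ne])
  fix t assume t: "t \<in> S"
  have "ip n g (Bv a n m u t) = ip n g (Bv a n m v t) + s * ip n g (Bv a n m z t)"
    unfolding ip_Bv using assms
    by (simp add: sum.distrib sum_distrib_left algebra_simps)
  then have "\<bar>ip n g (Bv a n m u t)\<bar> \<le> \<bar>ip n g (Bv a n m v t)\<bar> + \<bar>s\<bar> * \<bar>ip n g (Bv a n m z t)\<bar>"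
    by (simp add: abs_mult[symmetric] abs_triangle_ineq)
  also have "\<dots> \<le> F v g + \<bar>s\<bar> * F z g"
    using Fs_ge[OF t] by (intro add_mono mult_left_mono) auto
  finally show "\<bar>ip n g (Bv a n m u t)\<bar> \<le> (SUP t\<in>S. \<bar>ip n g (Bv a n m v t)\<bar>) + \<bar>s\<bar> * (SUP t\<in>S. \<bar>ip n g (Bv a n m z t)\<bar>)"
    unfolding Fs_def .
qed

lemma Fs_neg_g:
  assumes "\<And>i. i < n \<Longrightarrow> g' i = - g i"
  shows "F x g' = F x g"
proof -
  have "ip n g' v = - ip n g v" for v
    unfolding ip_def using assms by (simp add: sum_negf[symmetric])
  then show ?thesis unfolding Fs_def by simp
qed

lemma Fs_neg_x:
  assumes "\<And>j. j < n \<Longrightarrow> x' j = - x j"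
  shows "F x' g = F x g"
proof -
  have "ip n g (Bv a n m x' t) = - ip n g (Bv a n m x t)" for t
    unfolding ip_Bv using assms by (simp add: sum_negf[symmetric])
  then show ?thesis unfolding Fs_def by simp
qed

end


lemma int_std_abs: "integrable (density lborel std_normal_density) (\<lambda>x::real. \<bar>x\<bar>)"
proof -
  have "integrable lborel (\<lambda>x. std_normal_density x * \<bar>x\<bar>^1)"
    by (rule integrable_std_normal_moment_abs)
  then show ?thesis by (subst integrable_density) (auto simp: normal_density_nonneg)
qed

lemma coord_measurable_std: "i < n \<Longrightarrow> (\<lambda>\<omega>. \<omega> i) \<in> measurable (gauss n) (density lborel std_normal_density)"
  unfolding gauss_def by (rule measurable_component_singleton) simp

lemma int_abs_coord: "i < n \<Longrightarrow> integrable (gauss n) (\<lambda>g. \<bar>g i\<bar>)"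
proof -
  assume i: "i < n"
  have d: "distr (gauss n) (density lborel std_normal_density) (\<lambda>\<omega>. \<omega> i) = density lborel std_normal_density"
    unfolding gauss_def using i prob_space_std by (intro distr_PiM_component) auto
  have "integrable (distr (gauss n) (density lborel std_normal_density) (\<lambda>\<omega>. \<omega> i)) (\<lambda>x::real. \<bar>x\<bar>)"
    unfolding d by (rule int_std_abs)
  then show ?thesis
    by (subst (asm) integrable_distr_eq[OF coord_measurable_std[OF i]]) auto
qed

lemma int_coord: "i < n \<Longrightarrow> integrable (gauss n) (\<lambda>g. g i)"
  using int_abs_coord[of i n] integrable_abs_iff[of "\<lambda>g. g i" "gauss n"] by simp

lemma int_sa: "integrable (gauss n) (\<lambda>g. sa n g)"
  unfolding sa_def by (rule Bochner_Integration.integrable_sum) (auto intro: int_abs_coord)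

lemma lin_meas: "(\<lambda>g. \<Sum>j<n. c j * g j) \<in> borel_measurable (gauss n)"
  by (rule Borel_Space.borel_measurable_sum) auto

lemma lin_int: "integrable (gauss n) (\<lambda>g. \<Sum>j<n. c j * g j)"
  by (rule Bochner_Integration.integrable_sum) (auto intro: int_coord)

lemma ip_meas: "(\<lambda>g. ip n g v) \<in> borel_measurable (gauss n)"
  using lin_meas[where c=v and n=n] unfolding ip_def by (simp add: mult.commute)

lemma ip_int: "integrable (gauss n) (\<lambda>g. ip n g v)"
  using lin_int[where c=v and n=n] unfolding ip_def by (simp add: mult.commute)

lemma Bv_lin: "Bv a n m g t i = (\<Sum>j<n. (\<Sum>k<m. a i j k * t k) * g j)"
  unfolding Bv_def by (simp add: sum_distrib_right sum_distrib_left mult_ac)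

lemma nrmBv_meas: "(\<lambda>g. nrm n (Bv a n m g t)) \<in> borel_measurable (gauss n)"
proof -
  have "(\<lambda>g. \<Sum>i<n. (\<Sum>j<n. (\<Sum>k<m. a i j k * t k) * g j)\<^sup>2) \<in> borel_measurable (gauss n)"
    by (rule Borel_Space.borel_measurable_sum) (intro borel_measurable_power lin_meas)
  then show ?thesis unfolding nrm_def Bv_lin by measurable
qed

lemma int_by_sa:
  assumes "f \<in> borel_measurable (gauss n)" "\<And>g. g \<in> space (gauss n) \<Longrightarrow> \<bar>f g\<bar> \<le> C * sa n g"
  shows "integrable (gauss n) f"
proof (rule Bochner_Integration.integrable_bound[OF _ assms(1)])
  show "integrable (gauss n) (\<lambda>g. C * sa n g)" using int_sa by (rule integrable_mult_right)
  show "AE x in gauss n. norm (f x) \<le> norm (C * sa n x)"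
  proof (rule AE_I2)
    fix x assume "x \<in> space (gauss n)"
    then have "\<bar>f x\<bar> \<le> C * sa n x" by (rule assms(2))
    also have "\<dots> \<le> \<bar>C * sa n x\<bar>" by simp
    finally show "norm (f x) \<le> norm (C * sa n x)" by simp
  qed
qed

lemma nrm_le_sum: "nrm n v \<le> (\<Sum>i<n. \<bar>v i\<bar>)"
proof -
  have "nrm n v = L2_set v {..<n}" unfolding nrm_def L2_set_def ..
  also have "\<dots> \<le> sum (\<lambda>i. \<bar>v i\<bar>) {..<n}" by (rule L2_set_le_sum_abs)
  finally show ?thesis .
qed

lemma nrm_nonneg: "0 \<le> nrm n v"
  unfolding nrm_def by (simp add: sum_nonneg)

lemma nrm_triangle: "nrm n (\<lambda>i. u i + w i) \<le> nrm n u + nrm n w"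
  unfolding nrm_def using L2_set_triangle_ineq[of u w "{..<n}"] by (simp add: L2_set_def)

lemma nrm_cong: "(\<And>i. i < n \<Longrightarrow> u i = w i) \<Longrightarrow> nrm n u = nrm n w"
  unfolding nrm_def by (intro arg_cong[where f=sqrt] sum.cong) auto

lemma nrm_scale: "nrm n (\<lambda>i. c * u i) = \<bar>c\<bar> * nrm n u"
proof -
  have "(\<Sum>i<n. (c * u i)\<^sup>2) = c\<^sup>2 * (\<Sum>i<n. (u i)\<^sup>2)"
    by (simp add: power_mult_distrib sum_distrib_left)
  then show ?thesis unfolding nrm_def by (simp add: real_sqrt_mult)
qed

lemma nrm_minus_sym: "nrm n (\<lambda>i. u i - w i) = nrm n (\<lambda>i. w i - u i)"
  unfolding nrm_def by (simp add: power2_commute)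

lemma ip_self: "ip n v v = (nrm n v)\<^sup>2"
  unfolding ip_def nrm_def by (simp add: sum_nonneg power2_eq_square)

lemma markov_gt:
  assumes P: "prob_space M" and f[measurable]: "f \<in> borel_measurable M" and fi: "integrable M f"
    and nn: "\<And>x. x \<in> space M \<Longrightarrow> 0 \<le> f x" and b: "(\<integral>x. f x \<partial>M) \<le> b" and k: "0 < \<kappa>"
  shows "measure M {x\<in>space M. f x > \<kappa> * b} \<le> 1 / \<kappa>"
proof -
  interpret prob_space M by (rule P)
  have I0: "0 \<le> (\<integral>x. f x \<partial>M)" using nn by (intro Bochner_Integration.integral_nonneg) auto
  show ?thesis
  proof (cases "b > 0")
    case True
    have "measure M {x\<in>space M. f x > \<kappa> * b} \<le> measure M {x\<in>space M. f x \<ge> \<kappa> * b}"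
      by (intro finite_measure_mono) auto
    also have "\<dots> \<le> (\<integral>x. f x \<partial>M) / (\<kappa> * b)"
      using True k nn by (intro integral_Markov_inequality_measure[OF fi]) auto
    also have "\<dots> \<le> b / (\<kappa> * b)"
      using True k b by (intro divide_right_mono) auto
    also have "\<dots> = 1 / \<kappa>" using True by simp
    finally show ?thesis .
  next
    case False
    then have "(\<integral>x. f x \<partial>M) = 0" using I0 b by linarith
    then have "AE x in M. f x = 0"
      using integral_nonneg_eq_0_iff_AE[OF fi] nn by auto
    then have "emeasure M {x\<in>space M. \<not> f x = 0} = 0"
      by (subst (asm) AE_iff_measurable[OF _ refl]) auto
    moreover have "{x\<in>space M. f x > \<kappa> * b} \<subseteq> {x\<in>space M. \<not> f x = 0}"
      proof -
      have "b = 0" using False I0 b by linarith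
      then show ?thesis by auto
    qed
    ultimately have "measure M {x\<in>space M. f x > \<kappa> * b} \<le> measure M {x\<in>space M. \<not> f x = 0}"
      by (intro finite_measure_mono) auto
    also have "measure M {x\<in>space M. \<not> f x = 0} = 0"
      using \<open>emeasure M {x\<in>space M. \<not> f x = 0} = 0\<close> by (simp add: measure_def)
    finally have "measure M {x\<in>space M. f x > \<kappa> * b} \<le> 0" .
    moreover have "0 \<le> 1 / \<kappa>" using k by simp
    ultimately show ?thesis by linarith
  qed
qed

lemma prob_and:
  fixes f1 f2 :: "'a \<Rightarrow> real"
  assumes P: "prob_space M" and [measurable]: "f1 \<in> borel_measurable M" "f2 \<in> borel_measurable M"
  shows "measure M {x\<in>space M. f1 x \<le> c1 \<and> f2 x \<le> c2}
         \<ge> 1 - measure M {x\<in>space M. f1 x > c1} - measure M {x\<in>space M. f2 x > c2}"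
proof -
  interpret prob_space M by (rule P)
  have eq: "{x\<in>space M. f1 x \<le> c1 \<and> f2 x \<le> c2} = space M - ({x\<in>space M. f1 x > c1} \<union> {x\<in>space M. f2 x > c2})"
    by auto
  have "measure M ({x\<in>space M. f1 x > c1} \<union> {x\<in>space M. f2 x > c2})
      \<le> measure M {x\<in>space M. f1 x > c1} + measure M {x\<in>space M. f2 x > c2}"
    by (intro measure_Un_le) auto
  then show ?thesis unfolding eq by (subst prob_compl) auto
qed

context bnd
begin

definition beta :: "(nat \<Rightarrow> real) \<Rightarrow> real" where
  "beta x = (\<integral>g. F x g \<partial>gauss n)"

lemma beta_eq: "betaAS a n m S x = beta x"
  unfolding beta_def betaAS_eq ..

lemma Fs_meas_g: "(\<lambda>g. F x g) \<in> borel_measurable (gauss n)"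
  by (rule lip_measurable[OF Fs_lip_g])

lemma Fs_int_g: "integrable (gauss n) (\<lambda>g. F x g)"
proof (rule int_by_sa[OF Fs_meas_g])
  fix g
  show "\<bar>F x g\<bar> \<le> AB * sa n x * Tb * sa n g"
    using Fs_le[of x g] Fs_nonneg[of x g] by (simp add: mult_ac)
qed

lemma Fs_zero: "(\<And>j. j < n \<Longrightarrow> x j = 0) \<Longrightarrow> F x g = 0"
proof -
  assume "\<And>j. j < n \<Longrightarrow> x j = 0"
  then have "sa n x = 0" unfolding sa_def by simp
  then show ?thesis using Fs_le[of x g] Fs_nonneg[of x g] by simp
qed

definition Lb :: real where "Lb = AB * Tb * (\<integral>g. sa n g \<partial>gauss n)"

lemma beta_lip: "\<bar>beta x - beta x'\<bar> \<le> Lb * (\<Sum>j<n. \<bar>x j - x' j\<bar>)"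
proof -
  define D where "D = (\<Sum>j<n. \<bar>x j - x' j\<bar>)"
  have bnd1: "\<bar>F x g - F x' g\<bar> \<le> (AB * Tb * D) * sa n g" for g
    using Fs_lip_x[of x g x'] by (simp add: D_def mult_ac)
  have "beta x - beta x' = (\<integral>g. F x g - F x' g \<partial>gauss n)"
    unfolding beta_def by (subst Bochner_Integration.integral_diff) (auto intro: Fs_int_g)
  also have "\<dots> \<le> (\<integral>g. (AB * Tb * D) * sa n g \<partial>gauss n)"
    using bnd1 by (intro integral_mono Fs_int_g Bochner_Integration.integrable_diff integrable_mult_right int_sa) (auto simp: abs_le_iff)
  finally have 1: "beta x - beta x' \<le> Lb * D" by (simp add: Lb_def mult_ac)
  have "beta x' - beta x = (\<integral>g. F x' g - F x g \<partial>gauss n)"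
    unfolding beta_def by (subst Bochner_Integration.integral_diff) (auto intro: Fs_int_g)
  also have "\<dots> \<le> (\<integral>g. (AB * Tb * D) * sa n g \<partial>gauss n)"
    using bnd1 by (intro integral_mono Fs_int_g Bochner_Integration.integrable_diff integrable_mult_right int_sa) (auto simp: abs_le_iff)
  finally have 2: "beta x' - beta x \<le> Lb * D" by (simp add: Lb_def mult_ac)
  from 1 2 show ?thesis by (simp add: D_def abs_le_iff)
qed

lemma beta_meas: "beta \<in> borel_measurable (gauss n)"
  by (rule lip_measurable[OF beta_lip])

lemma beta_zero: "(\<And>j. j < n \<Longrightarrow> x j = 0) \<Longrightarrow> beta x = 0"
proof -
  assume "\<And>j. j < n \<Longrightarrow> x j = 0"
  then have "F x = (\<lambda>_. 0)" using Fs_zero by auto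
  then show ?thesis unfolding beta_def by simp
qed

lemma beta_nonneg: "0 \<le> beta x"
  unfolding beta_def by (intro Bochner_Integration.integral_nonneg Fs_nonneg)

lemma beta_int: "integrable (gauss n) beta"
proof (rule int_by_sa[OF beta_meas])
  fix g
  have "\<bar>beta g - beta (\<lambda>_. 0)\<bar> \<le> Lb * (\<Sum>j<n. \<bar>g j - 0\<bar>)" by (rule beta_lip)
  then show "\<bar>beta g\<bar> \<le> Lb * sa n g" by (simp add: beta_zero sa_def)
qed

lemma beta_comb:
  assumes "\<And>j. j < n \<Longrightarrow> u j = v j + s * z j"
  shows "beta u \<le> beta v + \<bar>s\<bar> * beta z"
proof -
  have "beta u \<le> (\<integral>g. F v g + \<bar>s\<bar> * F z g \<partial>gauss n)"
    unfolding beta_def using Fs_comb[OF assms]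
    by (intro integral_mono Fs_int_g Bochner_Integration.integrable_add integrable_mult_right) auto
  also have "\<dots> = beta v + \<bar>s\<bar> * beta z"
    unfolding beta_def by (subst Bochner_Integration.integral_add) (auto intro: Fs_int_g)
  finally show ?thesis .
qed

lemma beta_neg: "(\<And>j. j < n \<Longrightarrow> x' j = - x j) \<Longrightarrow> beta x' = beta x"
proof -
  assume "\<And>j. j < n \<Longrightarrow> x' j = - x j"
  then have "F x' = F x" using Fs_neg_x by auto
  then show ?thesis unfolding beta_def by simp
qed

lemma ipBv_int: "integrable (gauss n) (\<lambda>g. \<bar>ip n g (Bv a n m x t)\<bar>)"
  by (intro integrable_abs ip_int)

lemma beta_ge_ip: "t \<in> S \<Longrightarrow> (\<integral>g. \<bar>ip n g (Bv a n m x t)\<bar> \<partial>gauss n) \<le> beta x"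
  unfolding beta_def by (intro integral_mono ipBv_int Fs_int_g Fs_ge)

lemma nrmBv_int: "integrable (gauss n) (\<lambda>g. nrm n (Bv a n m g t))"
proof -
  define c where "c = (\<lambda>i j. \<Sum>k<m. a i j k * t k)"
  define Cb where "Cb = (\<Sum>i<n. \<Sum>j<n. \<bar>c i j\<bar>)"
  have cle: "i < n \<Longrightarrow> j < n \<Longrightarrow> \<bar>c i j\<bar> \<le> Cb" for i j
    unfolding Cb_def
    by (intro order_trans[OF _ member_le_sum[of i]] member_le_sum[of j]) (auto intro: sum_nonneg)
  show ?thesis
  proof (rule int_by_sa[OF nrmBv_meas])
    fix g
    have "nrm n (Bv a n m g t) \<le> (\<Sum>i<n. \<bar>Bv a n m g t i\<bar>)" by (rule nrm_le_sum)
    also have "\<dots> \<le> (\<Sum>i<n. \<Sum>j<n. \<bar>c i j\<bar> * \<bar>g j\<bar>)"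
      unfolding Bv_lin c_def[symmetric] by (intro sum_mono order_trans[OF sum_abs]) (simp add: abs_mult c_def)
    also have "\<dots> \<le> (\<Sum>i<n. \<Sum>j<n. Cb * \<bar>g j\<bar>)"
      using cle by (intro sum_mono mult_right_mono) auto
    also have "\<dots> = (real n * Cb) * sa n g"
      by (simp add: sa_def sum_distrib_left mult_ac)
    finally show "\<bar>nrm n (Bv a n m g t)\<bar> \<le> (real n * Cb) * sa n g"
      using nrm_nonneg by simp
  qed
qed

end


lemma ip_gshift: "ip n (gshift n a z) v = ip n z v + ip n a v"
  unfolding ip_def gshift_def by (simp add: sum.distrib[symmetric] distrib_right)

lemma ip_gneg: "ip n (gneg n z) v = - ip n z v"
proof -
  have "ip n (gneg n z) v = (\<Sum>i<n. - (z i * v i))"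
    unfolding ip_def gneg_def by (rule sum.cong) auto
  then show ?thesis unfolding ip_def by (simp add: sum_negf)
qed

lemma ipabs_meas: "(\<lambda>g. \<bar>ip n g v\<bar>) \<in> borel_measurable (gauss n)"
  using ip_meas by measurable

lemma ipabs_int: "integrable (gauss n) (\<lambda>g. \<bar>ip n g v\<bar>)"
  by (intro integrable_abs ip_int)

lemma exp_half: "1/2 \<le> exp (- (1/2::real))"
  using exp_ge_add_one_self[of "- (1/2::real)"] by simp

lemma prob_le_from_markov:
  assumes f[measurable]: "f \<in> borel_measurable (gauss n)" and fi: "integrable (gauss n) f"
    and nn: "\<And>x. x \<in> space (gauss n) \<Longrightarrow> 0 \<le> f x" and b: "(\<integral>x. f x \<partial>gauss n) \<le> b" and k: "0 < \<kappa>"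
  shows "measure (gauss n) {x\<in>space (gauss n). f x \<le> \<kappa> * b} \<ge> 1 - 1 / \<kappa>"
proof -
  interpret G: prob_space "gauss n" by (rule prob_space_gauss)
  have eq: "{x\<in>space (gauss n). f x \<le> \<kappa> * b} = space (gauss n) - {x\<in>space (gauss n). f x > \<kappa> * b}"
    by auto
  have "measure (gauss n) {x\<in>space (gauss n). f x > \<kappa> * b} \<le> 1 / \<kappa>"
    by (rule markov_gt[OF prob_space_gauss f fi nn b k])
  then show ?thesis unfolding eq by (subst G.prob_compl) auto
qed

lemma lb_ip: "nrm n v \<le> 6 * (\<integral>g. \<bar>ip n g v\<bar> \<partial>gauss n)"
proof -
  interpret G: prob_space "gauss n" by (rule prob_space_gauss)
  define m where "m = (\<integral>g. \<bar>ip n g v\<bar> \<partial>gauss n)"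
  have m0: "0 \<le> m" unfolding m_def by (intro Bochner_Integration.integral_nonneg) auto
  show ?thesis
  proof (cases "nrm n v \<le> 2 * m")
    case True then show ?thesis using m0 unfolding m_def by linarith
  next
    case False
    then have nv: "nrm n v > 0" using m0 by linarith
    define K where "K = {g\<in>space (gauss n). \<bar>ip n g v\<bar> \<le> 2 * m}"
    have K[measurable]: "K \<in> sets (gauss n)" unfolding K_def using ipabs_meas by measurable
    have PK: "measure (gauss n) K \<ge> 1/2"
      using prob_le_from_markov[OF ipabs_meas ipabs_int _ _, where b=m and \<kappa>=2] unfolding K_def m_def by auto
    have symK: "gneg n g \<in> K \<longleftrightarrow> g \<in> K" if "g \<in> space (gauss n)" for g
      using that gneg_space[OF that] unfolding K_def by (auto simp: ip_gneg)
    define a where "a = (\<lambda>i. - v i / nrm n v)"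
    have sa1: "(\<Sum>i<n. (a i)\<^sup>2) = 1"
    proof -
      have "(\<Sum>i<n. (a i)\<^sup>2) = (\<Sum>i<n. (v i)\<^sup>2) / (nrm n v)\<^sup>2"
        unfolding a_def by (simp add: power_divide sum_divide_distrib)
      also have "(nrm n v)\<^sup>2 = (\<Sum>i<n. (v i)\<^sup>2)"
        unfolding nrm_def by (simp add: sum_nonneg)
      finally show ?thesis using nv by (simp add: nrm_def)
    qed
    have ipa: "ip n a v = - nrm n v"
    proof -
      have "ip n a v = - ip n v v / nrm n v"
        unfolding ip_def a_def by (simp add: sum_divide_distrib[symmetric] sum_negf mult.commute)
      then show ?thesis using nv by (simp add: ip_self power2_eq_square)
    qed
    define E where "E = {g\<in>space (gauss n). gshift n a g \<in> K}"
    have E[measurable]: "E \<in> sets (gauss n)" unfolding E_def by measurable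
    have PE: "measure (gauss n) E \<ge> 1/4"
    proof -
      have "measure (gauss n) E \<ge> exp (- (\<Sum>i<n. (a i)\<^sup>2) / 2) * measure (gauss n) K"
        unfolding E_def by (rule gauss_shift_ineq[OF K symK])
      moreover have "exp (- (\<Sum>i<n. (a i)\<^sup>2) / 2) * measure (gauss n) K \<ge> 1/2 * (1/2)"
        unfolding sa1 using exp_half PK by (intro mult_mono) auto
      ultimately show ?thesis by simp
    qed
    have onE: "\<bar>ip n g v\<bar> \<ge> nrm n v - 2 * m" if "g \<in> E" for g
    proof -
      from that have "\<bar>ip n (gshift n a g) v\<bar> \<le> 2 * m" unfolding E_def K_def by auto
      then have "\<bar>ip n g v - nrm n v\<bar> \<le> 2 * m" by (simp add: ip_gshift ipa)
      then show ?thesis by linarith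
    qed
    have "(\<integral>g. (nrm n v - 2 * m) * indicator E g \<partial>gauss n) \<le> (\<integral>g. \<bar>ip n g v\<bar> \<partial>gauss n)"
    proof (rule integral_mono)
      show "integrable (gauss n) (\<lambda>g. (nrm n v - 2 * m) * indicator E g)"
      proof -
        have "emeasure (gauss n) E < \<infinity>" by (simp add: G.emeasure_eq_measure)
        from integrable_real_indicator[OF E this] show ?thesis by (rule integrable_mult_right)
      qed
      show "integrable (gauss n) (\<lambda>g. \<bar>ip n g v\<bar>)" by (rule ipabs_int)
      fix g assume "g \<in> space (gauss n)"
      then show "(nrm n v - 2 * m) * indicator E g \<le> \<bar>ip n g v\<bar>"
        using onE[of g] by (cases "g \<in> E") auto
    qed
    moreover have "(\<integral>g. (nrm n v - 2 * m) * indicator E g \<partial>gauss n) = (nrm n v - 2 * m) * measure (gauss n) E"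
      using E by (simp add: Int_absorb2 sets.sets_into_space)
    ultimately have "(nrm n v - 2 * m) * measure (gauss n) E \<le> m" unfolding m_def by simp
    moreover have "(nrm n v - 2 * m) * (1/4) \<le> (nrm n v - 2 * m) * measure (gauss n) E"
      using PE False by (intro mult_left_mono) auto
    ultimately have "(nrm n v - 2 * m) * (1/4) \<le> m" by linarith
    then have "nrm n v \<le> 6 * m" by (simp add: algebra_simps)
    then show ?thesis unfolding m_def .
  qed
qed


locale sud =
  fixes n :: nat and h :: "(nat \<Rightarrow> real) \<Rightarrow> real" and T :: "(nat \<Rightarrow> real) set"
  assumes h_meas[measurable]: "h \<in> borel_measurable (gauss n)" and h_int: "integrable (gauss n) h"
    and h_sym: "\<And>z. z \<in> space (gauss n) \<Longrightarrow> h (gneg n z) = h z"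
    and h_ip: "\<And>z u w. z \<in> space (gauss n) \<Longrightarrow> u \<in> T \<Longrightarrow> w \<in> T \<Longrightarrow> \<bar>ip n z (\<lambda>i. u i - w i)\<bar> \<le> h z"
    and T_fin: "finite T"
begin

definition H where "H = (\<integral>z. h z \<partial>gauss n)"

lemma h_nonneg: "T \<noteq> {} \<Longrightarrow> z \<in> space (gauss n) \<Longrightarrow> 0 \<le> h z"
proof -
  assume "T \<noteq> {}" "z \<in> space (gauss n)"
  then obtain u where "u \<in> T" by auto
  from h_ip[OF \<open>z \<in> space (gauss n)\<close> this this] show ?thesis by (simp add: ip_def)
qed

lemma H_nonneg: "T \<noteq> {} \<Longrightarrow> 0 \<le> H"
  unfolding H_def by (intro Bochner_Integration.integral_nonneg h_nonneg)

lemma diam: "u \<in> T \<Longrightarrow> w \<in> T \<Longrightarrow> nrm n (\<lambda>i. u i - w i) \<le> 6 * H"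
proof -
  assume uw: "u \<in> T" "w \<in> T"
  have "nrm n (\<lambda>i. u i - w i) \<le> 6 * (\<integral>z. \<bar>ip n z (\<lambda>i. u i - w i)\<bar> \<partial>gauss n)" by (rule lb_ip)
  also have "(\<integral>z. \<bar>ip n z (\<lambda>i. u i - w i)\<bar> \<partial>gauss n) \<le> H"
    unfolding H_def using uw by (intro integral_mono ipabs_int h_int h_ip)
  finally show ?thesis by simp
qed

lemma local_bound:
  assumes QT: "Q \<subseteq> T" and Rb: "\<And>q. q \<in> Q \<Longrightarrow> nrm n (\<lambda>i. q i - c i) \<le> R"
    and sep: "\<And>q q'. q \<in> Q \<Longrightarrow> q' \<in> Q \<Longrightarrow> q \<noteq> q' \<Longrightarrow> \<rho> < nrm n (\<lambda>i. q i - q' i)"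
    and rho: "0 < \<rho>" and Hp: "0 < H"
  shows "real (card Q) \<le> 2 * exp (8 * R\<^sup>2 * H\<^sup>2 / \<rho>^4)"
proof (cases "Q = {}")
  case True then show ?thesis by simp
next
  case False
  interpret G: prob_space "gauss n" by (rule prob_space_gauss)
  have Tne: "T \<noteq> {}" using False QT by auto
  have Qfin: "finite Q" using QT T_fin finite_subset by auto
  define K where "K = {z\<in>space (gauss n). h z \<le> 2 * H}"
  have K[measurable]: "K \<in> sets (gauss n)" unfolding K_def by measurable
  have PK: "measure (gauss n) K \<ge> 1/2"
    using prob_le_from_markov[OF h_meas h_int h_nonneg[OF Tne], where b=H and \<kappa>=2] unfolding K_def H_def by auto
  have symK: "gneg n z \<in> K \<longleftrightarrow> z \<in> K" if "z \<in> space (gauss n)" for z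
    using that gneg_space[OF that] h_sym[OF that] unfolding K_def by auto
  define l where "l = \<rho>\<^sup>2 / (4 * H)"
  have l0: "0 < l" unfolding l_def using rho Hp by simp
  define a where "a = (\<lambda>q i. (q i - c i) / l)"
  define E where "E = (\<lambda>q. {z\<in>space (gauss n). gshift n (a q) z \<in> K})"
  have E[measurable]: "E q \<in> sets (gauss n)" for q unfolding E_def by measurable
  have sumsq: "(\<Sum>i<n. (a q i)\<^sup>2) \<le> R\<^sup>2 / l\<^sup>2" if q: "q \<in> Q" for q
  proof -
    have "(\<Sum>i<n. (a q i)\<^sup>2) = (\<Sum>i<n. (q i - c i)\<^sup>2) / l\<^sup>2"
      unfolding a_def by (simp add: power_divide sum_divide_distrib)
    also have "(\<Sum>i<n. (q i - c i)\<^sup>2) = (nrm n (\<lambda>i. q i - c i))\<^sup>2"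
      unfolding nrm_def by (simp add: sum_nonneg)
    also have "(nrm n (\<lambda>i. q i - c i))\<^sup>2 \<le> R\<^sup>2"
      using Rb[OF q] nrm_nonneg by (intro power_mono) auto
    finally show ?thesis using l0 by (simp add: divide_right_mono)
  qed
  have PE: "measure (gauss n) (E q) \<ge> exp (- (R\<^sup>2 / l\<^sup>2) / 2) * (1/2)" if q: "q \<in> Q" for q
  proof -
    have "measure (gauss n) (E q) \<ge> exp (- (\<Sum>i<n. (a q i)\<^sup>2) / 2) * measure (gauss n) K"
      unfolding E_def by (rule gauss_shift_ineq[OF K symK])
    moreover have "exp (- (\<Sum>i<n. (a q i)\<^sup>2) / 2) * measure (gauss n) K \<ge> exp (- (R\<^sup>2 / l\<^sup>2) / 2) * (1/2)"
      using sumsq[OF q] PK by (intro mult_mono) auto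
    ultimately show ?thesis by simp
  qed
  have disj: "disjoint_family_on E Q"
  proof (unfold disjoint_family_on_def, intro ballI impI)
    fix q q' assume q: "q \<in> Q" and q': "q' \<in> Q" and ne: "q \<noteq> q'"
    show "E q \<inter> E q' = {}"
    proof (rule ccontr)
      assume "E q \<inter> E q' \<noteq> {}"
      then obtain z where z: "z \<in> space (gauss n)" "h (gshift n (a q) z) \<le> 2 * H" "h (gshift n (a q') z) \<le> 2 * H"
        unfolding E_def K_def by auto
      define d where "d = (\<lambda>i. q i - q' i)"
      have "ip n (gshift n (a q) z) d - ip n (gshift n (a q') z) d = ip n (a q) d - ip n (a q') d"
        by (simp add: ip_gshift)
      also have "\<dots> = ip n d d / l"
        unfolding ip_def a_def d_def by (simp add: sum_subtractf[symmetric] sum_divide_distrib diff_divide_distrib[symmetric] left_diff_distrib[symmetric])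
      also have "\<dots> = (nrm n d)\<^sup>2 / l" by (simp add: ip_self)
      finally have eq: "ip n (gshift n (a q) z) d - ip n (gshift n (a q') z) d = (nrm n d)\<^sup>2 / l" .
      have "\<bar>ip n (gshift n (a q) z) d\<bar> \<le> h (gshift n (a q) z)"
        unfolding d_def using q q' QT by (intro h_ip gshift_space) auto
      moreover have "\<bar>ip n (gshift n (a q') z) d\<bar> \<le> h (gshift n (a q') z)"
        unfolding d_def using q q' QT by (intro h_ip gshift_space) auto
      ultimately have "(nrm n d)\<^sup>2 / l \<le> 4 * H" using eq z by linarith
      then have "(nrm n d)\<^sup>2 \<le> 4 * H * l" using l0 by (simp add: divide_le_eq)
      also have "4 * H * l = \<rho>\<^sup>2" unfolding l_def using Hp by simp
      finally have "(nrm n d)\<^sup>2 \<le> \<rho>\<^sup>2" .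
      moreover have "\<rho> < nrm n d" unfolding d_def by (rule sep[OF q q' ne])
      then have "\<rho>\<^sup>2 < (nrm n d)\<^sup>2" using rho by (intro power_strict_mono) auto
      ultimately show False by linarith
    qed
  qed
  have "(\<Sum>q\<in>Q. measure (gauss n) (E q)) = measure (gauss n) (\<Union>q\<in>Q. E q)"
    using Qfin disj by (intro measure_finite_Union[symmetric]) auto
  also have "\<dots> \<le> 1" by (rule G.prob_le_1)
  finally have s1: "(\<Sum>q\<in>Q. measure (gauss n) (E q)) \<le> 1" .
  have "real (card Q) * (exp (- (R\<^sup>2 / l\<^sup>2) / 2) * (1/2)) = (\<Sum>q\<in>Q. exp (- (R\<^sup>2 / l\<^sup>2) / 2) * (1/2))"
    by simp
  also have "\<dots> \<le> (\<Sum>q\<in>Q. measure (gauss n) (E q))" by (intro sum_mono PE)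
  finally have "real (card Q) * (exp (- (R\<^sup>2 / l\<^sup>2) / 2) * (1/2)) \<le> 1" using s1 by linarith
  then have "real (card Q) \<le> 2 / exp (- (R\<^sup>2 / l\<^sup>2) / 2)"
    by (simp add: field_simps)
  also have "\<dots> = 2 * exp (R\<^sup>2 / l\<^sup>2 / 2)" by (simp add: exp_minus field_simps)
  also have "R\<^sup>2 / l\<^sup>2 / 2 = 8 * R\<^sup>2 * H\<^sup>2 / \<rho>^4"
    unfolding l_def using rho Hp by (simp add: field_simps power2_eq_square power4_eq_xxxx)
  finally show ?thesis .
qed

definition sepd :: "real \<Rightarrow> (nat \<Rightarrow> real) set \<Rightarrow> bool" where
  "sepd \<rho> Q \<longleftrightarrow> (\<forall>q\<in>Q. \<forall>q'\<in>Q. q \<noteq> q' \<longrightarrow> \<rho> < nrm n (\<lambda>i. q i - q' i))"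

lemma scale:
  assumes Hp: "0 < H"
  shows "\<forall>\<rho>. 0 < \<rho> \<longrightarrow> 6 * H \<le> \<rho> * 2^k \<longrightarrow> (\<forall>Q. Q \<subseteq> T \<longrightarrow> sepd \<rho> Q \<longrightarrow> real (card Q) \<le> 2^k * exp (43 * H\<^sup>2 / \<rho>\<^sup>2))"
proof (induction k)
  case 0
  show ?case
  proof (intro allI impI)
    fix \<rho> :: real and Q assume rho: "0 < \<rho>" "6 * H \<le> \<rho> * 2^0" and QT: "Q \<subseteq> T" and sQ: "sepd \<rho> Q"
    have Qfin: "finite Q" using QT T_fin finite_subset by auto
    have "\<forall>q\<in>Q. \<forall>q'\<in>Q. q = q'"
    proof (intro ballI, rule ccontr)
      fix q q' assume q: "q \<in> Q" "q' \<in> Q" "q \<noteq> q'"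
      then have "\<rho> < nrm n (\<lambda>i. q i - q' i)" using sQ unfolding sepd_def by auto
      moreover have "nrm n (\<lambda>i. q i - q' i) \<le> 6 * H" using q QT by (intro diam) auto
      ultimately show False using rho by simp
    qed
    then have "card Q \<le> 1" using card_le_Suc0_iff_eq[OF Qfin] by simp
    then have "real (card Q) \<le> 1" by simp
    also have "1 \<le> exp (43 * H\<^sup>2 / \<rho>\<^sup>2)" by simp
    finally show "real (card Q) \<le> 2^0 * exp (43 * H\<^sup>2 / \<rho>\<^sup>2)" by simp
  qed
next
  case (Suc k)
  show ?case
  proof (intro allI impI)
    fix \<rho> :: real and Q assume rho: "0 < \<rho>" "6 * H \<le> \<rho> * 2^Suc k" and QT: "Q \<subseteq> T" and sQ: "sepd \<rho> Q"
    have Qfin: "finite Q" using QT T_fin finite_subset by auto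
    define SS where "SS = (\<lambda>P. P \<subseteq> Q \<and> sepd (2 * \<rho>) P)"
    have "SS {}" unfolding SS_def sepd_def by auto
    moreover have "\<forall>P. SS P \<longrightarrow> card P < Suc (card Q)"
      unfolding SS_def using Qfin by (auto simp: less_Suc_eq_le intro: card_mono)
    ultimately obtain P where SP: "SS P" and Pmax: "\<And>P'. SS P' \<Longrightarrow> card P' \<le> card P"
      using ex_has_greatest_nat[of SS "{}" card "Suc (card Q)"] by blast
    have PQ: "P \<subseteq> Q" and sP: "sepd (2 * \<rho>) P" using SP unfolding SS_def by auto
    have Pfin: "finite P" using PQ Qfin finite_subset by auto
    have IH: "real (card P) \<le> 2^k * exp (43 * H\<^sup>2 / (2 * \<rho>)\<^sup>2)"
    proof -
      have "0 < 2 * \<rho>" "6 * H \<le> (2 * \<rho>) * 2^k" "P \<subseteq> T" using rho PQ QT by auto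
      then show ?thesis using Suc.IH sP by blast
    qed
    have cover: "\<exists>p\<in>P. nrm n (\<lambda>i. q i - p i) \<le> 2 * \<rho>" if q: "q \<in> Q" for q
    proof (rule ccontr)
      assume "\<not> (\<exists>p\<in>P. nrm n (\<lambda>i. q i - p i) \<le> 2 * \<rho>)"
      then have far: "\<And>p. p \<in> P \<Longrightarrow> 2 * \<rho> < nrm n (\<lambda>i. q i - p i)" by auto
      have qP: "q \<notin> P" using far[of q] rho by (auto simp: nrm_def)
      have far2: "\<And>p. p \<in> P \<Longrightarrow> 2 * \<rho> < nrm n (\<lambda>i. p i - q i)"
        using far nrm_minus_sym by metis
      have "SS (insert q P)"
        unfolding SS_def sepd_def using PQ q sP far far2
        unfolding sepd_def by auto
      then have "card (insert q P) \<le> card P" by (rule Pmax)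
      then show False using qP Pfin by simp
    qed
    define Qp where "Qp = (\<lambda>p. {q\<in>Q. nrm n (\<lambda>i. q i - p i) \<le> 2 * \<rho>})"
    have "Q \<subseteq> (\<Union>p\<in>P. Qp p)" unfolding Qp_def using cover by auto
    then have "card Q \<le> card (\<Union>p\<in>P. Qp p)"
      using Pfin Qfin by (intro card_mono) (auto simp: Qp_def)
    also have "\<dots> \<le> (\<Sum>p\<in>P. card (Qp p))" using Pfin by (rule card_UN_le)
    finally have c1': "card Q \<le> (\<Sum>p\<in>P. card (Qp p))" .
    have c1: "real (card Q) \<le> (\<Sum>p\<in>P. real (card (Qp p)))"
      using c1' by (simp only: of_nat_sum[symmetric] of_nat_le_iff)
    have c2: "real (card (Qp p)) \<le> 2 * exp (32 * H\<^sup>2 / \<rho>\<^sup>2)" if p: "p \<in> P" for p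
    proof -
      have "real (card (Qp p)) \<le> 2 * exp (8 * (2 * \<rho>)\<^sup>2 * H\<^sup>2 / \<rho>^4)"
      proof (rule local_bound[OF _ _ _ rho(1) Hp])
        show "Qp p \<subseteq> T" using QT unfolding Qp_def by auto
        show "\<And>q. q \<in> Qp p \<Longrightarrow> nrm n (\<lambda>i. q i - p i) \<le> 2 * \<rho>" unfolding Qp_def by auto
        show "\<And>q q'. q \<in> Qp p \<Longrightarrow> q' \<in> Qp p \<Longrightarrow> q \<noteq> q' \<Longrightarrow> \<rho> < nrm n (\<lambda>i. q i - q' i)"
          using sQ unfolding Qp_def sepd_def by auto
      qed
      also have "8 * (2 * \<rho>)\<^sup>2 * H\<^sup>2 / \<rho>^4 = 32 * H\<^sup>2 / \<rho>\<^sup>2"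
        using rho by (simp add: field_simps power2_eq_square power4_eq_xxxx)
      finally show ?thesis .
    qed
    have "real (card Q) \<le> (\<Sum>p\<in>P. 2 * exp (32 * H\<^sup>2 / \<rho>\<^sup>2))"
      using c1 sum_mono[of P "\<lambda>p. real (card (Qp p))" "\<lambda>_. 2 * exp (32 * H\<^sup>2 / \<rho>\<^sup>2)", OF c2] by linarith
    also have "\<dots> = real (card P) * (2 * exp (32 * H\<^sup>2 / \<rho>\<^sup>2))" by simp
    also have "\<dots> \<le> (2^k * exp (43 * H\<^sup>2 / (2 * \<rho>)\<^sup>2)) * (2 * exp (32 * H\<^sup>2 / \<rho>\<^sup>2))"
      using IH by (intro mult_right_mono) auto
    also have "\<dots> = 2^Suc k * exp (43 * H\<^sup>2 / (2 * \<rho>)\<^sup>2 + 32 * H\<^sup>2 / \<rho>\<^sup>2)"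
      by (simp only: exp_add power_Suc mult_ac)
    also have "\<dots> \<le> 2^Suc k * exp (43 * H\<^sup>2 / \<rho>\<^sup>2)"
    proof -
      have "43 * H\<^sup>2 / (2 * \<rho>)\<^sup>2 + 32 * H\<^sup>2 / \<rho>\<^sup>2 = (171 / 4) * (H\<^sup>2 / \<rho>\<^sup>2)"
        using rho by (simp add: field_simps power2_eq_square)
      also have "\<dots> \<le> 43 * (H\<^sup>2 / \<rho>\<^sup>2)" by (intro mult_right_mono) auto
      finally show ?thesis by simp
    qed
    finally show "real (card Q) \<le> 2^Suc k * exp (43 * H\<^sup>2 / \<rho>\<^sup>2)" .
  qed
qed

lemma sudakov:
  assumes r0: "0 \<le> r" and sepT: "sepd r T" and Hq: "H \<le> q * r" and q0: "0 < q"
  shows "real (card T) \<le> exp (1 + 79 * q\<^sup>2)"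
proof (cases "T = {}")
  case True then show ?thesis by simp
next
  case False
  have H0: "0 \<le> H" by (rule H_nonneg[OF False])
  show ?thesis
  proof (cases "H = 0")
    case True
    have "\<forall>u\<in>T. \<forall>w\<in>T. u = w"
    proof (intro ballI, rule ccontr)
      fix u w assume uw: "u \<in> T" "w \<in> T" "u \<noteq> w"
      then have "r < nrm n (\<lambda>i. u i - w i)" using sepT unfolding sepd_def by auto
      moreover have "nrm n (\<lambda>i. u i - w i) \<le> 6 * H" using uw by (intro diam) auto
      ultimately show False using True r0 by simp
    qed
    then have "card T \<le> 1" using card_le_Suc0_iff_eq[OF T_fin] by simp
    then have "real (card T) \<le> 1" by simp
    also have "1 \<le> exp (1 + 79 * q\<^sup>2)" by simp
    finally show ?thesis .
  next
    case False
    then have Hp: "0 < H" using H0 by simp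
    have rp: "0 < r" using Hp Hq q0 r0 by (cases "r = 0") auto
    obtain k0 :: nat where "6 * H / r < 2 ^ k0" using real_arch_pow[of 2 "6 * H / r"] by auto
    then have ex: "\<exists>k::nat. 6 * H \<le> r * 2 ^ k" using rp by (intro exI[of _ k0]) (simp add: field_simps)
    define k where "k = (LEAST k::nat. 6 * H \<le> r * 2 ^ k)"
    have kk: "6 * H \<le> r * 2 ^ k" unfolding k_def by (rule LeastI_ex[OF ex])
    have k2: "(2::real) ^ k \<le> 1 + 12 * q"
    proof (cases k)
      case 0 then show ?thesis using q0 by simp
    next
      case (Suc k')
      have "\<not> 6 * H \<le> r * 2 ^ k'"
      proof
        assume "6 * H \<le> r * 2 ^ k'"
        then have "k \<le> k'" unfolding k_def by (rule Least_le)
        then show False using Suc by simp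
      qed
      then have "r * 2 ^ k' < 6 * H" by simp
      then have "r * 2 ^ k < 12 * H" using Suc by simp
      also have "12 * H \<le> 12 * (q * r)" using Hq by simp
      finally have "2 ^ k < 12 * q" using rp by (simp add: mult.commute[of r] mult.assoc)
      then show ?thesis by simp
    qed
    have "real (card T) \<le> 2^k * exp (43 * H\<^sup>2 / r\<^sup>2)"
      using scale[OF Hp, of k] rp kk sepT by auto
    also have "\<dots> \<le> (1 + 12 * q) * exp (43 * q\<^sup>2)"
    proof (intro mult_mono k2)
      have "H / r \<le> q" using Hq rp by (simp add: divide_le_eq mult.commute)
      then have "(H / r)\<^sup>2 \<le> q\<^sup>2" using H0 rp by (intro power_mono) auto
      then show "exp (43 * H\<^sup>2 / r\<^sup>2) \<le> exp (43 * q\<^sup>2)" by (simp add: power_divide)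
    qed (use q0 in auto)
    also have "\<dots> \<le> exp (12 * q) * exp (43 * q\<^sup>2)"
      using exp_ge_add_one_self[of "12 * q"] by (intro mult_right_mono) auto
    also have "\<dots> \<le> exp (1 + 79 * q\<^sup>2)"
    proof -
      have "12 * q \<le> 1 + 36 * q\<^sup>2"
        using sum_power2_ge_zero[of "6 * q - 1" 0] by (simp add: power2_eq_square algebra_simps)
      then show ?thesis by (simp add: exp_add[symmetric])
    qed
    finally show ?thesis .
  qed
qed

end


lemma Bv_gshift: "Bv a n m (gshift n c g) t i = Bv a n m g t i + Bv a n m c t i"
proof -
  have "Bv a n m (gshift n c g) t i = (\<Sum>j<n. \<Sum>k<m. a i j k * g j * t k + a i j k * c j * t k)"
    unfolding Bv_def gshift_def by (intro sum.cong refl) (auto simp: algebra_simps)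
  then show ?thesis unfolding Bv_def by (simp add: sum.distrib)
qed

lemma Bv_scale: "Bv a n m (\<lambda>j. x j / e) t i = Bv a n m x t i / e"
  unfolding Bv_def by (simp add: sum_divide_distrib)

lemma Bv_gneg: "Bv a n m (gneg n w) t i = - Bv a n m w t i"
proof -
  have "Bv a n m (gneg n w) t i = (\<Sum>j<n. - (\<Sum>k<m. a i j k * w j * t k))"
    unfolding Bv_def gneg_def by (intro sum.cong refl) (auto simp: sum_negf[symmetric])
  then show ?thesis unfolding Bv_def by (simp add: sum_negf)
qed

lemma nrm_neg: "nrm n (\<lambda>i. - u i) = nrm n u"
  unfolding nrm_def by simp

lemma dA_eq': "dA a n m p p' = nrm n (\<lambda>i. Bv a n m (fst p) (snd p) i - Bv a n m (fst p') (snd p') i)"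
  using dA_eq[of a n m "fst p" "snd p" "fst p'" "snd p'"] by simp

lemma unit_ball_sq: "x \<in> unit_ball n \<Longrightarrow> (\<Sum>j<n. (x j)\<^sup>2) \<le> 1"
  unfolding unit_ball_def by auto

lemma unit_ball_coord: "x \<in> unit_ball n \<Longrightarrow> j < n \<Longrightarrow> \<bar>x j\<bar> \<le> 1"
proof -
  assume x: "x \<in> unit_ball n" and j: "j < n"
  have "(x j)\<^sup>2 \<le> (\<Sum>j<n. (x j)\<^sup>2)" using j by (intro member_le_sum) auto
  also have "\<dots> \<le> 1" using unit_ball_sq[OF x] .
  finally have "(x j)\<^sup>2 \<le> 1\<^sup>2" by simp
  then show ?thesis using abs_le_square_iff[of "x j" 1] by simp
qed

context bnd
begin

lemma betaAS_fun: "betaAS a n m S = beta"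
  by (rule ext) (rule beta_eq)

lemma beta_le_lin: "beta x \<le> \<bar>Lb\<bar> * sa n x"
proof -
  have "\<bar>beta x - beta (\<lambda>_. 0)\<bar> \<le> Lb * (\<Sum>j<n. \<bar>x j - 0\<bar>)" by (rule beta_lip)
  then have "beta x \<le> Lb * sa n x" by (simp add: beta_zero sa_def)
  also have "\<dots> \<le> \<bar>Lb\<bar> * sa n x" using sa_nonneg[of n x] by (intro mult_right_mono) auto
  finally show ?thesis .
qed

lemma bddU: "U \<subseteq> unit_ball n \<Longrightarrow> bdd_above (beta ` U)"
proof (intro bdd_aboveI2)
  fix x assume U: "U \<subseteq> unit_ball n" and x: "x \<in> U"
  have "sa n x \<le> (\<Sum>j<n. 1)" unfolding sa_def using unit_ball_coord[of x n] U x by (intro sum_mono) auto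
  then have "sa n x \<le> real n" by simp
  then show "beta x \<le> \<bar>Lb\<bar> * real n"
    using beta_le_lin[of x] by (meson abs_ge_zero mult_left_mono order_trans)
qed

lemma nrmBv_le: "t \<in> S \<Longrightarrow> nrm n (Bv a n m g t) \<le> AB * (sa n g * Tb)"
proof -
  assume t: "t \<in> S"
  have "nrm n (Bv a n m g t) \<le> (\<Sum>i<n. \<bar>Bv a n m g t i\<bar>)" by (rule nrm_le_sum)
  also have "\<dots> \<le> (\<Sum>i<n. \<Sum>j<n. \<Sum>k<m. \<bar>a i j k * g j * t k\<bar>)"
    unfolding Bv_def by (intro sum_mono order_trans[OF sum_abs] sum_abs)
  also have "\<dots> \<le> (\<Sum>i<n. \<Sum>j<n. \<Sum>k<m. \<bar>a i j k\<bar> * (sa n g * 1 * Tb))"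
  proof (intro sum_mono)
    fix i j k assume "j \<in> {..<n}" "k \<in> {..<m}"
    then have "\<bar>a i j k * g j * 1 * t k\<bar> \<le> \<bar>a i j k\<bar> * (sa n g * 1 * Tb)"
      using le_sa[of j n g] Tb[OF t] by (intro prod4_le) auto
    then show "\<bar>a i j k * g j * t k\<bar> \<le> \<bar>a i j k\<bar> * (sa n g * 1 * Tb)" by simp
  qed
  also have "\<dots> = AB * (sa n g * Tb)" unfolding Ab_def by (simp add: sum_distrib_right)
  finally show ?thesis .
qed

lemma bddM: "bdd_above ((\<lambda>t. \<integral>g. nrm n (Bv a n m g t) \<partial>gauss n) ` S)"
proof (intro bdd_aboveI2)
  fix t assume t: "t \<in> S"
  show "(\<integral>g. nrm n (Bv a n m g t) \<partial>gauss n) \<le> (\<integral>g. AB * (sa n g * Tb) \<partial>gauss n)"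
    using nrmBv_le[OF t] by (intro integral_mono nrmBv_int integrable_mult_right integrable_mult_left int_sa) auto
qed

lemma M_nonneg: "0 \<le> (SUP t\<in>S. \<integral>g. nrm n (Bv a n m g t) \<partial>gauss n)"
proof -
  obtain t where t: "t \<in> S" using S_ne by auto
  have "0 \<le> (\<integral>g. nrm n (Bv a n m g t) \<partial>gauss n)"
    by (intro Bochner_Integration.integral_nonneg nrm_nonneg)
  also have "\<dots> \<le> (SUP t\<in>S. \<integral>g. nrm n (Bv a n m g t) \<partial>gauss n)"
    by (rule cSUP_upper[OF t bddM])
  finally show ?thesis .
qed

lemma pointwise:
  assumes U: "U \<subseteq> unit_ball n" and eps: "0 < \<epsilon>"
    and Yd: "Y = (\<integral>g. beta g \<partial>gauss n)" and Xd: "Xs = (SUP x\<in>U. beta x)"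
    and Md: "M = (SUP t\<in>S. \<integral>g. nrm n (Bv a n m g t) \<partial>gauss n)"
    and LP: "L \<subseteq> U \<times> S" and Lfin: "finite L"
    and sepL: "\<And>p p'. p \<in> L \<Longrightarrow> p' \<in> L \<Longrightarrow> p \<noteq> p' \<Longrightarrow> 4 * \<epsilon>\<^sup>2 * Y + \<epsilon> * Xs + 4 * \<epsilon> * M < dA a n m p p'"
    and g: "g \<in> space (gauss n)"
    and inW: "\<And>p. p \<in> L \<Longrightarrow> nrm n (Bv a n m (gshift n (\<lambda>j. fst p j / \<epsilon>) g) (snd p)) \<le> 8/5 * M
                \<and> beta (gshift n (\<lambda>j. fst p j / \<epsilon>) g) \<le> 8 * Y"
  shows "real (card L) \<le> exp (1 + 79 * (4/\<epsilon>)\<^sup>2)"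
proof (cases "L = {}")
  case True then show ?thesis by simp
next
  case False
  then obtain p0 where p0: "p0 \<in> L" by auto
  have M0: "0 \<le> M" unfolding Md by (rule M_nonneg)
  have Y0: "0 \<le> Y" unfolding Yd by (intro Bochner_Integration.integral_nonneg beta_nonneg)
  have x0U: "fst p0 \<in> U" using p0 LP by auto
  have bx0: "beta (fst p0) \<le> Xs" unfolding Xd by (rule cSUP_upper[OF x0U bddU[OF U]])
  have X0: "0 \<le> Xs" using bx0 beta_nonneg[of "fst p0"] by linarith
  define r where "r = 4 * \<epsilon>\<^sup>2 * Y + \<epsilon> * Xs"
  have r0: "0 \<le> r" unfolding r_def using eps Y0 X0 by simp
  define v :: "(nat \<Rightarrow> real) \<times> (nat \<Rightarrow> real) \<Rightarrow> nat \<Rightarrow> real" where "v = (\<lambda>p. (\<lambda>i. - \<epsilon> * Bv a n m g (snd p) i))"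
  have close: "nrm n (\<lambda>i. Bv a n m (fst p) (snd p) i - v p i) \<le> \<epsilon> * (8/5 * M)" if p: "p \<in> L" for p
  proof -
    have "(\<lambda>i. Bv a n m (fst p) (snd p) i - v p i) = (\<lambda>i. \<epsilon> * Bv a n m (gshift n (\<lambda>j. fst p j / \<epsilon>) g) (snd p) i)"
      using eps unfolding v_def by (auto simp: Bv_gshift Bv_scale algebra_simps)
    then have "nrm n (\<lambda>i. Bv a n m (fst p) (snd p) i - v p i) = \<epsilon> * nrm n (Bv a n m (gshift n (\<lambda>j. fst p j / \<epsilon>) g) (snd p))"
      using eps by (simp add: nrm_scale)
    also have "\<dots> \<le> \<epsilon> * (8/5 * M)" using inW[OF p] eps by (intro mult_left_mono) auto
    finally show ?thesis .
  qed
  have sepv: "r < nrm n (\<lambda>i. v p i - v p' i)" if p: "p \<in> L" and p': "p' \<in> L" and ne: "p \<noteq> p'" for p p'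
  proof -
    define A where "A = (\<lambda>i. Bv a n m (fst p) (snd p) i)"
    define B where "B = (\<lambda>i. Bv a n m (fst p') (snd p') i)"
    have "dA a n m p p' = nrm n (\<lambda>i. A i - B i)" unfolding dA_eq' A_def B_def ..
    also have "\<dots> \<le> nrm n (\<lambda>i. A i - v p i) + nrm n (\<lambda>i. v p i - B i)"
      using nrm_triangle[of n "\<lambda>i. A i - v p i" "\<lambda>i. v p i - B i"] by simp
    also have "nrm n (\<lambda>i. v p i - B i) \<le> nrm n (\<lambda>i. v p i - v p' i) + nrm n (\<lambda>i. v p' i - B i)"
      using nrm_triangle[of n "\<lambda>i. v p i - v p' i" "\<lambda>i. v p' i - B i"] by simp
    also have "nrm n (\<lambda>i. v p' i - B i) = nrm n (\<lambda>i. B i - v p' i)" by (rule nrm_minus_sym)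
    finally have "dA a n m p p' \<le> nrm n (\<lambda>i. A i - v p i) + (nrm n (\<lambda>i. v p i - v p' i) + nrm n (\<lambda>i. B i - v p' i))"
      by simp
    moreover have "nrm n (\<lambda>i. A i - v p i) \<le> \<epsilon> * (8/5 * M)" unfolding A_def by (rule close[OF p])
    moreover have "nrm n (\<lambda>i. B i - v p' i) \<le> \<epsilon> * (8/5 * M)" unfolding B_def by (rule close[OF p'])
    moreover have "4 * \<epsilon>\<^sup>2 * Y + \<epsilon> * Xs + 4 * \<epsilon> * M < dA a n m p p'" by (rule sepL[OF p p' ne])
    moreover have "0 \<le> \<epsilon> * M" using eps M0 by simp
    ultimately show ?thesis unfolding r_def by linarith
  qed
  have injv: "inj_on v L"
  proof (rule inj_onI, rule ccontr)
    fix p p' assume "p \<in> L" "p' \<in> L" "v p = v p'" "p \<noteq> p'"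
    then have "r < nrm n (\<lambda>i. v p i - v p' i)" using sepv by blast
    then show False using \<open>v p = v p'\<close> r0 by (simp add: nrm_def)
  qed
  define T where "T = v ` L"
  have cardT: "card T = card L" unfolding T_def using injv by (rule card_image)
  define h where "h = (\<lambda>z. 2 * \<epsilon> * F g z)"
  interpret SD: sud n h T
  proof
    show "h \<in> borel_measurable (gauss n)" unfolding h_def using Fs_meas_g by measurable
    show "integrable (gauss n) h" unfolding h_def by (intro integrable_mult_right Fs_int_g)
    show "h (gneg n z) = h z" if "z \<in> space (gauss n)" for z
      unfolding h_def by (subst Fs_neg_g[of "gneg n z" z]) (auto simp: gneg_def)
    show "finite T" unfolding T_def using Lfin by simp
    fix z u w assume z: "z \<in> space (gauss n)" and u: "u \<in> T" and w: "w \<in> T"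
    then obtain p p' where p: "p \<in> L" and p': "p' \<in> L" and uv: "u = v p" and wv: "w = v p'"
      unfolding T_def by auto
    have tS: "snd p \<in> S" "snd p' \<in> S" using p p' LP by auto
    have "ip n z (\<lambda>i. u i - w i) = (\<Sum>i<n. \<epsilon> * (z i * Bv a n m g (snd p') i) - \<epsilon> * (z i * Bv a n m g (snd p) i))"
      unfolding uv wv v_def ip_def by (intro sum.cong refl) (simp add: algebra_simps)
    also have "\<dots> = \<epsilon> * ip n z (Bv a n m g (snd p')) - \<epsilon> * ip n z (Bv a n m g (snd p))"
      unfolding ip_def by (simp only: sum_subtractf sum_distrib_left)
    finally have ipe: "ip n z (\<lambda>i. u i - w i) = \<epsilon> * ip n z (Bv a n m g (snd p')) - \<epsilon> * ip n z (Bv a n m g (snd p))" .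
    have "\<bar>ip n z (\<lambda>i. u i - w i)\<bar> \<le> \<bar>\<epsilon> * ip n z (Bv a n m g (snd p'))\<bar> + \<bar>\<epsilon> * ip n z (Bv a n m g (snd p))\<bar>"
      unfolding ipe by (rule abs_triangle_ineq4)
    also have "\<dots> = \<epsilon> * \<bar>ip n z (Bv a n m g (snd p'))\<bar> + \<epsilon> * \<bar>ip n z (Bv a n m g (snd p))\<bar>"
      using eps by (simp add: abs_mult)
    also have "\<dots> \<le> \<epsilon> * F g z + \<epsilon> * F g z"
      using eps Fs_ge[OF tS(1)] Fs_ge[OF tS(2)] by (intro add_mono mult_left_mono) auto
    finally show "\<bar>ip n z (\<lambda>i. u i - w i)\<bar> \<le> h z" unfolding h_def by simp
  qed
  have Hval: "SD.H = 2 * \<epsilon> * beta g"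
    unfolding SD.H_def unfolding h_def beta_def by simp
  define w0 where "w0 = gshift n (\<lambda>j. fst p0 j / \<epsilon>) g"
  have "beta g \<le> beta w0 + \<bar>- 1 / \<epsilon>\<bar> * beta (fst p0)"
    by (rule beta_comb) (use eps in \<open>auto simp: w0_def gshift_def\<close>)
  also have "\<dots> \<le> 8 * Y + (1 / \<epsilon>) * Xs"
    using inW[OF p0] bx0 eps unfolding w0_def by (intro add_mono mult_left_mono) (auto simp: divide_right_mono)
  finally have bg: "beta g \<le> 8 * Y + (1 / \<epsilon>) * Xs" .
  have "SD.H \<le> 2 * \<epsilon> * (8 * Y + (1 / \<epsilon>) * Xs)" unfolding Hval using bg eps by simp
  also have "\<dots> = 16 * \<epsilon> * Y + 2 * Xs" using eps by (simp add: algebra_simps)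
  also have "\<dots> \<le> (4 / \<epsilon>) * r" unfolding r_def using eps X0 by (simp add: field_simps power2_eq_square)
  finally have Hq: "SD.H \<le> (4 / \<epsilon>) * r" .
  have "SD.sepd r T"
    unfolding SD.sepd_def T_def using sepv by auto
  then have "real (card T) \<le> exp (1 + 79 * (4/\<epsilon>)\<^sup>2)"
    using SD.sudakov[OF r0 _ Hq] eps by simp
  then show ?thesis using cardT by simp
qed

end


context bnd
begin

lemma packing:
  assumes U: "U \<subseteq> unit_ball n" and eps: "0 < \<epsilon>"
    and Yd: "Y = (\<integral>g. beta g \<partial>gauss n)" and Xd: "Xs = (SUP x\<in>U. beta x)"
    and Md: "M = (SUP t\<in>S. \<integral>g. nrm n (Bv a n m g t) \<partial>gauss n)"
    and PP: "P \<subseteq> U \<times> S" and Pfin: "finite P"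
    and sepP: "\<And>p p'. p \<in> P \<Longrightarrow> p' \<in> P \<Longrightarrow> p \<noteq> p' \<Longrightarrow> 4 * \<epsilon>\<^sup>2 * Y + \<epsilon> * Xs + 4 * \<epsilon> * M < dA a n m p p'"
  shows "real (card P) \<le> 4 * exp (1 / (2 * \<epsilon>\<^sup>2)) * exp (1 + 79 * (4/\<epsilon>)\<^sup>2)"
proof -
  interpret G: prob_space "gauss n" by (rule prob_space_gauss)
  define Lbound where "Lbound = exp (1 + 79 * (4/\<epsilon>)\<^sup>2)"
  define W :: "(nat \<Rightarrow> real) \<times> (nat \<Rightarrow> real) \<Rightarrow> (nat \<Rightarrow> real) set" where "W = (\<lambda>p. {w\<in>space (gauss n). nrm n (Bv a n m w (snd p)) \<le> 8/5 * M \<and> beta w \<le> 8 * Y})"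
  have nm[measurable]: "(\<lambda>w. nrm n (Bv a n m w t)) \<in> borel_measurable (gauss n)" for t by (rule nrmBv_meas)
  have bm[measurable]: "beta \<in> borel_measurable (gauss n)" by (rule beta_meas)
  have Wm[measurable]: "W p \<in> sets (gauss n)" for p unfolding W_def by measurable
  have PW: "measure (gauss n) (W p) \<ge> 1/4" if p: "p \<in> P" for p
  proof -
    have tS: "snd p \<in> S" using p PP by auto
    have "measure (gauss n) (W p) \<ge> 1 - measure (gauss n) {w\<in>space (gauss n). nrm n (Bv a n m w (snd p)) > 8/5 * M}
           - measure (gauss n) {w\<in>space (gauss n). beta w > 8 * Y}"
      unfolding W_def by (rule prob_and[OF prob_space_gauss nm bm])
    moreover have "measure (gauss n) {w\<in>space (gauss n). nrm n (Bv a n m w (snd p)) > 8/5 * M} \<le> 1 / (8/5)"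
    proof (rule markov_gt[OF prob_space_gauss nm nrmBv_int])
      show "(\<integral>x. nrm n (Bv a n m x (snd p)) \<partial>gauss n) \<le> M"
        unfolding Md by (rule cSUP_upper[OF tS bddM])
    qed (auto simp: nrm_nonneg)
    moreover have "measure (gauss n) {w\<in>space (gauss n). beta w > 8 * Y} \<le> 1 / 8"
      by (rule markov_gt[OF prob_space_gauss bm beta_int]) (auto simp: beta_nonneg Yd)
    ultimately show ?thesis by simp
  qed
  have symW: "gneg n w \<in> W p \<longleftrightarrow> w \<in> W p" if w: "w \<in> space (gauss n)" for w p
  proof -
    have "nrm n (Bv a n m (gneg n w) (snd p)) = nrm n (Bv a n m w (snd p))"
    proof -
      have "Bv a n m (gneg n w) (snd p) = (\<lambda>i. - Bv a n m w (snd p) i)" by (rule ext) (rule Bv_gneg)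
      then show ?thesis using nrm_neg[of n "Bv a n m w (snd p)"] by simp
    qed
    moreover have "beta (gneg n w) = beta w" by (rule beta_neg) (simp add: gneg_def)
    ultimately show ?thesis unfolding W_def using w gneg_space[OF w] by auto
  qed
  define E :: "(nat \<Rightarrow> real) \<times> (nat \<Rightarrow> real) \<Rightarrow> (nat \<Rightarrow> real) set" where "E = (\<lambda>p. {g\<in>space (gauss n). gshift n (\<lambda>j. fst p j / \<epsilon>) g \<in> W p})"
  have Em[measurable]: "E p \<in> sets (gauss n)" for p unfolding E_def by measurable
  have PE: "measure (gauss n) (E p) \<ge> exp (- 1 / (2 * \<epsilon>\<^sup>2)) * (1/4)" if p: "p \<in> P" for p
  proof -
    have "p \<in> U \<times> S" using p PP by blast
    then have "fst p \<in> U" by (cases p) simp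
    then have xU: "fst p \<in> unit_ball n" using U by blast
    have ss: "(\<Sum>j<n. (fst p j / \<epsilon>)\<^sup>2) \<le> 1 / \<epsilon>\<^sup>2"
    proof -
      have "(\<Sum>j<n. (fst p j / \<epsilon>)\<^sup>2) = (\<Sum>j<n. (fst p j)\<^sup>2) / \<epsilon>\<^sup>2"
        by (simp add: power_divide sum_divide_distrib)
      also have "\<dots> \<le> 1 / \<epsilon>\<^sup>2" using unit_ball_sq[OF xU] eps by (intro divide_right_mono) auto
      finally show ?thesis .
    qed
    have "measure (gauss n) (E p) \<ge> exp (- (\<Sum>j<n. (fst p j / \<epsilon>)\<^sup>2) / 2) * measure (gauss n) (W p)"
      unfolding E_def by (rule gauss_shift_ineq[OF Wm symW])
    moreover have "exp (- (\<Sum>j<n. (fst p j / \<epsilon>)\<^sup>2) / 2) \<ge> exp (- 1 / (2 * \<epsilon>\<^sup>2))"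
      using ss by simp
    then have "exp (- (\<Sum>j<n. (fst p j / \<epsilon>)\<^sup>2) / 2) * measure (gauss n) (W p) \<ge> exp (- 1 / (2 * \<epsilon>\<^sup>2)) * (1/4)"
      using PW[OF p] by (intro mult_mono) auto
    ultimately show ?thesis by simp
  qed
  have cnt: "(\<Sum>p\<in>P. indicator (E p) g) = real (card {p\<in>P. g \<in> E p})" for g :: "nat \<Rightarrow> real"
  proof -
    have "(\<Sum>p\<in>P. indicator (E p) g :: real) = (\<Sum>p\<in>P. if g \<in> E p then 1 else 0)"
      by (intro sum.cong) (auto simp: indicator_def)
    also have "\<dots> = (\<Sum>p\<in>{p\<in>P. g \<in> E p}. (1::real))"
      by (rule sum.inter_filter[OF Pfin, symmetric])
    also have "\<dots> = real (card {p\<in>P. g \<in> E p})" by simp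
    finally show ?thesis .
  qed
  have pw: "real (card {p\<in>P. g \<in> E p}) \<le> Lbound" if g: "g \<in> space (gauss n)" for g
    unfolding Lbound_def
  proof (rule pointwise[OF U eps Yd Xd Md _ _ _ g])
    show "{p \<in> P. g \<in> E p} \<subseteq> U \<times> S" using PP by auto
    show "finite {p \<in> P. g \<in> E p}" using Pfin by simp
    show "\<And>p p'. p \<in> {p \<in> P. g \<in> E p} \<Longrightarrow> p' \<in> {p \<in> P. g \<in> E p} \<Longrightarrow> p \<noteq> p' \<Longrightarrow>
           4 * \<epsilon>\<^sup>2 * Y + \<epsilon> * Xs + 4 * \<epsilon> * M < dA a n m p p'" using sepP by auto
    show "\<And>p. p \<in> {p \<in> P. g \<in> E p} \<Longrightarrow>
         nrm n (Bv a n m (gshift n (\<lambda>j. fst p j / \<epsilon>) g) (snd p)) \<le> 8 / 5 * M \<and>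
         beta (gshift n (\<lambda>j. fst p j / \<epsilon>) g) \<le> 8 * Y"
      unfolding E_def W_def by auto
  qed
  have intE: "integrable (gauss n) (indicator (E p) :: _ \<Rightarrow> real)" for p
  proof -
    have "emeasure (gauss n) (E p) < \<infinity>" by (simp add: G.emeasure_eq_measure)
    then show ?thesis by (rule integrable_real_indicator[OF Em])
  qed
  have "real (card P) * (exp (- 1 / (2 * \<epsilon>\<^sup>2)) * (1/4)) = (\<Sum>p\<in>P. exp (- 1 / (2 * \<epsilon>\<^sup>2)) * (1/4))"
    by simp
  also have "\<dots> \<le> (\<Sum>p\<in>P. measure (gauss n) (E p))" by (intro sum_mono PE)
  also have "\<dots> = (\<Sum>p\<in>P. \<integral>g. indicator (E p) g \<partial>gauss n)"
    by (intro sum.cong refl) (simp add: Int_absorb2 sets.sets_into_space)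
  also have "\<dots> = (\<integral>g. (\<Sum>p\<in>P. indicator (E p) g) \<partial>gauss n)"
    by (rule Bochner_Integration.integral_sum[symmetric]) (rule intE)
  also have "\<dots> \<le> (\<integral>g. Lbound \<partial>gauss n)"
  proof (rule integral_mono)
    show "integrable (gauss n) (\<lambda>g. \<Sum>p\<in>P. indicator (E p) g :: real)"
      by (rule Bochner_Integration.integrable_sum) (rule intE)
    show "integrable (gauss n) (\<lambda>g. Lbound)" by simp
    fix g assume "g \<in> space (gauss n)"
    then show "(\<Sum>p\<in>P. indicator (E p) g) \<le> Lbound" using pw cnt by simp
  qed
  also have "\<dots> = Lbound" by (simp add: G.prob_space)
  finally have "real (card P) * (exp (- 1 / (2 * \<epsilon>\<^sup>2)) * (1/4)) \<le> Lbound" .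
  then have "real (card P) \<le> Lbound / (exp (- 1 / (2 * \<epsilon>\<^sup>2)) * (1/4))"
    by (simp add: field_simps)
  also have "\<dots> = 4 * exp (1 / (2 * \<epsilon>\<^sup>2)) * Lbound"
    by (simp add: exp_minus field_simps)
  finally show ?thesis unfolding Lbound_def .
qed

end


lemma nrm_zero_fun: "nrm n (\<lambda>i. u i - u i) = 0"
  unfolding nrm_def by simp

context bnd
begin

lemma nrmBv_le_beta: "t \<in> S \<Longrightarrow> nrm n (Bv a n m x t) \<le> 6 * beta x"
  using lb_ip[of n "Bv a n m x t"] beta_ge_ip[of t x] by linarith

lemma large_eps:
  assumes U: "U \<subseteq> unit_ball n" and eps: "12 \<le> \<epsilon>"
    and Yd: "Y = (\<integral>g. beta g \<partial>gauss n)" and Xd: "Xs = (SUP x\<in>U. beta x)"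
    and Md: "M = (SUP t\<in>S. \<integral>g. nrm n (Bv a n m g t) \<partial>gauss n)"
    and PP: "P \<subseteq> U \<times> S" and Pfin: "finite P"
    and sepP: "\<And>p p'. p \<in> P \<Longrightarrow> p' \<in> P \<Longrightarrow> p \<noteq> p' \<Longrightarrow> 4 * \<epsilon>\<^sup>2 * Y + \<epsilon> * Xs + 4 * \<epsilon> * M < dA a n m p p'"
  shows "card P \<le> 1"
proof -
  have M0: "0 \<le> M" unfolding Md by (rule M_nonneg)
  have Y0: "0 \<le> Y" unfolding Yd by (intro Bochner_Integration.integral_nonneg beta_nonneg)
  have bX: "beta x \<le> Xs" if "x \<in> U" for x unfolding Xd by (rule cSUP_upper[OF that bddU[OF U]])
  have "\<forall>p\<in>P. \<forall>p'\<in>P. p = p'"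
  proof (intro ballI, rule ccontr)
    fix p p' assume p: "p \<in> P" and p': "p' \<in> P" and ne: "p \<noteq> p'"
    have pU: "fst p \<in> U" "snd p \<in> S" "fst p' \<in> U" "snd p' \<in> S"
      using p p' PP by (auto simp: mem_Times_iff)
    have "dA a n m p p' = nrm n (\<lambda>i. Bv a n m (fst p) (snd p) i + (- Bv a n m (fst p') (snd p') i))"
      unfolding dA_eq' by simp
    also have "\<dots> \<le> nrm n (Bv a n m (fst p) (snd p)) + nrm n (\<lambda>i. - Bv a n m (fst p') (snd p') i)"
      by (rule nrm_triangle)
    also have "\<dots> = nrm n (Bv a n m (fst p) (snd p)) + nrm n (Bv a n m (fst p') (snd p'))"
      by (simp add: nrm_neg)
    also have "\<dots> \<le> 6 * beta (fst p) + 6 * beta (fst p')"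
      using pU by (intro add_mono nrmBv_le_beta) auto
    also have "\<dots> \<le> 12 * Xs" using bX[OF pU(1)] bX[OF pU(3)] by linarith
    finally have d: "dA a n m p p' \<le> 12 * Xs" .
    have X0: "0 \<le> Xs" using bX[OF pU(1)] beta_nonneg[of "fst p"] by linarith
    have "12 * Xs \<le> \<epsilon> * Xs" using eps X0 by (intro mult_right_mono) auto
    moreover have "0 \<le> 4 * \<epsilon>\<^sup>2 * Y + 4 * \<epsilon> * M" using eps Y0 M0 by simp
    moreover note sepP[OF p p' ne]
    ultimately show False using d by linarith
  qed
  then show ?thesis using card_le_Suc0_iff_eq[OF Pfin] by simp
qed

lemma four_le_exp2: "4 \<le> exp (2::real)"
proof -
  have "2 \<le> exp (1::real)" using exp_ge_add_one_self[of 1] by simp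
  then have "2 * 2 \<le> exp (1::real) * exp 1" by (intro mult_mono) auto
  then show ?thesis by (simp add: exp_add[symmetric])
qed

lemma card_bound:
  assumes U: "U \<subseteq> unit_ball n" and eps: "0 < \<epsilon>"
    and Yd: "Y = (\<integral>g. beta g \<partial>gauss n)" and Xd: "Xs = (SUP x\<in>U. beta x)"
    and Md: "M = (SUP t\<in>S. \<integral>g. nrm n (Bv a n m g t) \<partial>gauss n)"
    and PP: "P \<subseteq> U \<times> S" and Pfin: "finite P"
    and sepP: "\<And>p p'. p \<in> P \<Longrightarrow> p' \<in> P \<Longrightarrow> p \<noteq> p' \<Longrightarrow> 4 * \<epsilon>\<^sup>2 * Y + \<epsilon> * Xs + 4 * \<epsilon> * M < dA a n m p p'"
  shows "real (card P) \<le> exp (1700 / \<epsilon>\<^sup>2)"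
proof (cases "12 \<le> \<epsilon>")
  case True
  then have "card P \<le> 1" by (rule large_eps[OF U _ Yd Xd Md PP Pfin sepP])
  then have "real (card P) \<le> 1" by simp
  also have "1 \<le> exp (1700 / \<epsilon>\<^sup>2)" using eps by simp
  finally show ?thesis .
next
  case False
  have "real (card P) \<le> 4 * exp (1 / (2 * \<epsilon>\<^sup>2)) * exp (1 + 79 * (4/\<epsilon>)\<^sup>2)"
    by (rule packing[OF U eps Yd Xd Md PP Pfin sepP])
  also have "\<dots> \<le> exp 2 * exp (1 / (2 * \<epsilon>\<^sup>2)) * exp (1 + 79 * (4/\<epsilon>)\<^sup>2)"
    using four_le_exp2 by (intro mult_right_mono) auto
  also have "\<dots> = exp (3 + (1/2 + 1264) / \<epsilon>\<^sup>2)"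
  proof -
    have eq: "2 + 1 / (2 * \<epsilon>\<^sup>2) + (1 + 79 * (4/\<epsilon>)\<^sup>2) = 3 + (1/2 + 1264) / \<epsilon>\<^sup>2"
      using eps by (simp add: power_divide field_simps)
    show ?thesis by (simp only: exp_add[symmetric] eq)
  qed
  also have "\<dots> \<le> exp (1700 / \<epsilon>\<^sup>2)"
  proof -
    have e2: "\<epsilon>\<^sup>2 \<le> 144" using power_mono[of \<epsilon> 12 2] False eps by simp
    have "3 \<le> 432 / \<epsilon>\<^sup>2" using e2 eps by (simp add: field_simps)
    then have "3 + (1/2 + 1264) / \<epsilon>\<^sup>2 \<le> 432 / \<epsilon>\<^sup>2 + (1/2 + 1264) / \<epsilon>\<^sup>2" by simp
    also have "\<dots> = (432 + (1/2 + 1264)) / \<epsilon>\<^sup>2" by (simp add: add_divide_distrib)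
    also have "\<dots> \<le> 1700 / \<epsilon>\<^sup>2" using eps by (intro divide_right_mono) auto
    finally show ?thesis by simp
  qed
  finally show ?thesis .
qed

end


lemma covering_le:
  fixes \<rho> :: "'a \<Rightarrow> 'a \<Rightarrow> real"
  assumes sym: "\<And>x y. \<rho> x y = \<rho> y x" and refl: "\<And>x. \<rho> x x = 0" and d0: "0 \<le> \<delta>"
    and bnd: "\<And>P. P \<subseteq> W \<Longrightarrow> finite P \<Longrightarrow> (\<And>p p'. p \<in> P \<Longrightarrow> p' \<in> P \<Longrightarrow> p \<noteq> p' \<Longrightarrow> \<delta> / 2 < \<rho> p p') \<Longrightarrow> real (card P) \<le> K"
  shows "covering_number W \<rho> \<delta> \<noteq> \<infinity> \<and> real (the_enat (covering_number W \<rho> \<delta>)) \<le> K"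
proof -
  define SS where "SS = (\<lambda>P. P \<subseteq> W \<and> finite P \<and> (\<forall>p\<in>P. \<forall>p'\<in>P. p \<noteq> p' \<longrightarrow> \<delta> / 2 < \<rho> p p'))"
  have "SS {}" unfolding SS_def by simp
  moreover have "\<forall>P. SS P \<longrightarrow> card P < Suc (nat \<lceil>K\<rceil>)"
  proof (intro allI impI)
    fix P assume "SS P"
    then have "real (card P) \<le> K" unfolding SS_def by (intro bnd) auto
    then have "card P \<le> nat \<lceil>K\<rceil>" by linarith
    then show "card P < Suc (nat \<lceil>K\<rceil>)" by simp
  qed
  ultimately obtain P where SP: "SS P" and Pmax: "\<And>P'. SS P' \<Longrightarrow> card P' \<le> card P"
    using ex_has_greatest_nat[of SS "{}" card "Suc (nat \<lceil>K\<rceil>)"] by blast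
  have PW: "P \<subseteq> W" and Pfin: "finite P" and sP: "\<And>p p'. p \<in> P \<Longrightarrow> p' \<in> P \<Longrightarrow> p \<noteq> p' \<Longrightarrow> \<delta> / 2 < \<rho> p p'"
    using SP unfolding SS_def by auto
  have cov: "W \<subseteq> (\<Union>c\<in>P. {w. \<rho> c w \<le> \<delta> / 2})"
  proof
    fix w assume w: "w \<in> W"
    show "w \<in> (\<Union>c\<in>P. {w. \<rho> c w \<le> \<delta> / 2})"
    proof (rule ccontr)
      assume nc: "w \<notin> (\<Union>c\<in>P. {w. \<rho> c w \<le> \<delta> / 2})"
      then have far: "\<And>c. c \<in> P \<Longrightarrow> \<delta> / 2 < \<rho> c w" by auto
      have wP: "w \<notin> P" using far[of w] refl d0 by force
      have "SS (insert w P)"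
        unfolding SS_def using PW w Pfin sP far sym by auto
      then have "card (insert w P) \<le> card P" by (rule Pmax)
      then show False using wP Pfin by simp
    qed
  qed
  have "enat (card P) \<in> {enat (card F) | F. finite F \<and> W \<subseteq> (\<Union>c\<in>F. {w. \<rho> c w \<le> \<delta> / 2})}"
    using Pfin cov by blast
  then have le: "covering_number W \<rho> \<delta> \<le> enat (card P)"
    unfolding covering_number_def by (rule Inf_lower)
  then obtain k where k: "covering_number W \<rho> \<delta> = enat k" "k \<le> card P"
    by (cases "covering_number W \<rho> \<delta>") auto
  have "real (card P) \<le> K" using bnd[OF PW Pfin sP] .
  then show ?thesis using k by simp
qed

lemma covering_ge1:
  assumes "W \<noteq> {}" "covering_number W \<rho> \<delta> \<noteq> \<infinity>"
  shows "1 \<le> the_enat (covering_number W \<rho> \<delta>)"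
proof -
  have "enat 1 \<le> covering_number W \<rho> \<delta>"
    unfolding covering_number_def
  proof (rule Inf_greatest)
    fix x assume "x \<in> {enat (card F) | F. finite F \<and> W \<subseteq> (\<Union>c\<in>F. {w. \<rho> c w \<le> \<delta> / 2})}"
    then obtain F where F: "x = enat (card F)" "finite F" "W \<subseteq> (\<Union>c\<in>F. {w. \<rho> c w \<le> \<delta> / 2})" by auto
    then have "F \<noteq> {}" using assms(1) by auto
    then have "1 \<le> card F" using F(2) by (simp add: Suc_le_eq card_gt_0_iff)
    then show "enat 1 \<le> x" using F(1) by simp
  qed
  then show ?thesis using assms(2) by (cases "covering_number W \<rho> \<delta>") auto
qed


theorem corollary5p3:
  "\<exists>C::real. \<forall>(n::nat) (m::nat) (a::nat \<Rightarrow> nat \<Rightarrow> nat \<Rightarrow> real) U S.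
     U \<noteq> {} \<longrightarrow> U \<subseteq> unit_ball n \<longrightarrow> S \<noteq> {} \<longrightarrow> bounded_in m S \<longrightarrow>
     (\<forall>\<epsilon>>0.
        covering_number (U \<times> S) (dA a n m)
          (8 * \<epsilon>\<^sup>2 * (\<integral>g. betaAS a n m S g \<partial>gauss n)
           + 2 * \<epsilon> * (SUP x\<in>U. betaAS a n m S x)
           + 8 * \<epsilon> * (SUP t\<in>S. \<integral>g. alphaA a n m (tensor g t) \<partial>gauss n)) \<noteq> \<infinity>
      \<and> real (the_enat (covering_number (U \<times> S) (dA a n m)
          (8 * \<epsilon>\<^sup>2 * (\<integral>g. betaAS a n m S g \<partial>gauss n)
           + 2 * \<epsilon> * (SUP x\<in>U. betaAS a n m S x)
           + 8 * \<epsilon> * (SUP t\<in>S. \<integral>g. alphaA a n m (tensor g t) \<partial>gauss n))))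
         \<le> exp (C / \<epsilon>\<^sup>2)) \<and>
     (\<forall>\<delta>>0.
        covering_number (U \<times> S) (dA a n m) \<delta> \<noteq> \<infinity>
      \<and> sqrt (ln (real (the_enat (covering_number (U \<times> S) (dA a n m) \<delta>))))
         \<le> C * ((1 / \<delta>) * ((SUP x\<in>U. betaAS a n m S x)
                              + (SUP t\<in>S. \<integral>g. alphaA a n m (tensor g t) \<partial>gauss n))
                + (1 / sqrt \<delta>) * sqrt (\<integral>g. betaAS a n m S g \<partial>gauss n)))"
proof (intro exI[of _ 1700] allI impI)
  fix n m :: nat and a :: "nat \<Rightarrow> nat \<Rightarrow> nat \<Rightarrow> real" and U S :: "(nat \<Rightarrow> real) set"
  assume hU: "U \<noteq> {}" "U \<subseteq> unit_ball n" and hS: "S \<noteq> {}" "bounded_in m S"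
  obtain R where R: "\<And>t. t \<in> S \<Longrightarrow> (\<Sum>k<m. (t k)\<^sup>2) \<le> R" using hS(2) unfolding bounded_in_def by auto
  define Tb where "Tb = R + 1"
  have Tb: "\<bar>t k\<bar> \<le> Tb" if t: "t \<in> S" and k: "k < m" for t k
  proof -
    have "(t k)\<^sup>2 \<le> (\<Sum>k<m. (t k)\<^sup>2)" using k by (intro member_le_sum) auto
    also have "\<dots> \<le> R" by (rule R[OF t])
    finally have tk: "(t k)\<^sup>2 \<le> R" .
    show ?thesis
    proof (cases "\<bar>t k\<bar> \<le> 1")
      case True then show ?thesis using tk unfolding Tb_def by (smt (verit) zero_le_power2)
    next
      case False
      then have "1 * \<bar>t k\<bar> \<le> \<bar>t k\<bar> * \<bar>t k\<bar>" by (intro mult_right_mono) auto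
      then have "\<bar>t k\<bar> \<le> \<bar>t k\<bar> * \<bar>t k\<bar>" by simp
      also have "\<dots> = (t k)\<^sup>2" by (simp add: power2_eq_square abs_mult_self_eq)
      finally show ?thesis using tk unfolding Tb_def by linarith
    qed
  qed
  interpret B: bnd a n m S Tb
    by unfold_locales (use hS(1) Tb in auto)
  have ba: "betaAS a n m S = B.beta" by (rule B.betaAS_fun)
  define Y where "Y = (\<integral>g. B.beta g \<partial>gauss n)"
  define Xs where "Xs = (SUP x\<in>U. B.beta x)"
  define M where "M = (SUP t\<in>S. \<integral>g. nrm n (Bv a n m g t) \<partial>gauss n)"
  have Y0: "0 \<le> Y" unfolding Y_def by (intro Bochner_Integration.integral_nonneg B.beta_nonneg)
  have M0: "0 \<le> M" unfolding M_def by (rule B.M_nonneg)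
  have X0: "0 \<le> Xs"
  proof -
    obtain x where x: "x \<in> U" using hU by auto
    have "B.beta x \<le> Xs" unfolding Xs_def by (rule cSUP_upper[OF x B.bddU[OF hU(2)]])
    then show ?thesis using B.beta_nonneg[of x] by linarith
  qed
  have symd: "dA a n m p p' = dA a n m p' p" for p p'
    unfolding dA_eq' by (rule nrm_minus_sym)
  have refld: "dA a n m p p = 0" for p
    unfolding dA_eq' by (rule nrm_zero_fun)
  have key: "real (card P) \<le> exp (1700 / \<epsilon>\<^sup>2)"
    if eps: "0 < \<epsilon>" and dl: "8 * \<epsilon>\<^sup>2 * Y + 2 * \<epsilon> * Xs + 8 * \<epsilon> * M \<le> \<delta>" and PP: "P \<subseteq> U \<times> S" and Pfin: "finite P"
      and sep: "\<And>p p'. p \<in> P \<Longrightarrow> p' \<in> P \<Longrightarrow> p \<noteq> p' \<Longrightarrow> \<delta> / 2 < dA a n m p p'"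
    for \<epsilon> \<delta> P
  proof (rule B.card_bound[OF hU(2) eps Y_def Xs_def M_def PP Pfin])
    fix p p' assume "p \<in> P" "p' \<in> P" "p \<noteq> p'"
    from sep[OF this] dl show "4 * \<epsilon>\<^sup>2 * Y + \<epsilon> * Xs + 4 * \<epsilon> * M < dA a n m p p'" by linarith
  qed
  have part1: "covering_number (U \<times> S) (dA a n m) (8 * \<epsilon>\<^sup>2 * Y + 2 * \<epsilon> * Xs + 8 * \<epsilon> * M) \<noteq> \<infinity>
      \<and> real (the_enat (covering_number (U \<times> S) (dA a n m) (8 * \<epsilon>\<^sup>2 * Y + 2 * \<epsilon> * Xs + 8 * \<epsilon> * M))) \<le> exp (1700 / \<epsilon>\<^sup>2)"
    if eps: "0 < \<epsilon>" for \<epsilon>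
  proof (rule covering_le[OF symd refld])
    show "0 \<le> 8 * \<epsilon>\<^sup>2 * Y + 2 * \<epsilon> * Xs + 8 * \<epsilon> * M" using eps Y0 X0 M0 by simp
    show "\<And>P. P \<subseteq> U \<times> S \<Longrightarrow> finite P \<Longrightarrow> (\<And>p p'. p \<in> P \<Longrightarrow> p' \<in> P \<Longrightarrow> p \<noteq> p' \<Longrightarrow>
            (8 * \<epsilon>\<^sup>2 * Y + 2 * \<epsilon> * Xs + 8 * \<epsilon> * M) / 2 < dA a n m p p') \<Longrightarrow> real (card P) \<le> exp (1700 / \<epsilon>\<^sup>2)"
      by (rule key[OF eps order_refl])
  qed
  have part2: "covering_number (U \<times> S) (dA a n m) \<delta> \<noteq> \<infinity>
      \<and> sqrt (ln (real (the_enat (covering_number (U \<times> S) (dA a n m) \<delta>))))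
         \<le> 1700 * ((1 / \<delta>) * (Xs + M) + (1 / sqrt \<delta>) * sqrt Y)"
    if dp: "0 < \<delta>" for \<delta>
  proof -
    define X where "X = Xs + M"
    have XX: "0 \<le> X" unfolding X_def using X0 M0 by simp
    have rhs0: "0 \<le> 1700 * ((1 / \<delta>) * (Xs + M) + (1 / sqrt \<delta>) * sqrt Y)"
      using dp X0 M0 Y0 by simp
    have UxS: "U \<times> S \<noteq> {}" using hU hS by auto
    show ?thesis
    proof (cases "X = 0 \<and> Y = 0")
      case True
      then have Xs0: "Xs = 0" and MM0: "M = 0" and YY0: "Y = 0" using X0 M0 unfolding X_def by auto
      have c: "covering_number (U \<times> S) (dA a n m) \<delta> \<noteq> \<infinity> \<and> real (the_enat (covering_number (U \<times> S) (dA a n m) \<delta>)) \<le> 1"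
      proof (rule covering_le[OF symd refld])
        show "0 \<le> \<delta>" using dp by simp
        fix P assume PP: "P \<subseteq> U \<times> S" and Pfin: "finite P"
          and sep: "\<And>p p'. p \<in> P \<Longrightarrow> p' \<in> P \<Longrightarrow> p \<noteq> p' \<Longrightarrow> \<delta> / 2 < dA a n m p p'"
        have "card P \<le> 1"
        proof (rule B.large_eps[OF hU(2) order_refl Y_def Xs_def M_def PP Pfin])
          fix p p' assume "p \<in> P" "p' \<in> P" "p \<noteq> p'"
          from sep[OF this] dp show "4 * 12\<^sup>2 * Y + 12 * Xs + 4 * 12 * M < dA a n m p p'"
            using Xs0 MM0 YY0 by simp
        qed
        then show "real (card P) \<le> 1" by simp
      qed
      then have "1 \<le> the_enat (covering_number (U \<times> S) (dA a n m) \<delta>)"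
        using covering_ge1[OF UxS] by blast
      then have "real (the_enat (covering_number (U \<times> S) (dA a n m) \<delta>)) = 1" using c by linarith
      then show ?thesis using c rhs0 by simp
    next
      case False
      define q where "q = max (16 * X / \<delta>) (sqrt (16 * Y / \<delta>))"
      have q0: "0 < q"
      proof -
        have "0 < X \<or> 0 < Y" using False XX Y0 by auto
        then show ?thesis unfolding q_def using dp by (auto simp: less_max_iff_disj)
      qed
      define \<epsilon> where "\<epsilon> = 1 / q"
      have eps: "0 < \<epsilon>" unfolding \<epsilon>_def using q0 by simp
      have qX: "16 * X / \<delta> \<le> q" unfolding q_def by simp
      have qY: "16 * Y / \<delta> \<le> q\<^sup>2"
      proof -
        have "sqrt (16 * Y / \<delta>) \<le> q" unfolding q_def by simp
        then have "(sqrt (16 * Y / \<delta>))\<^sup>2 \<le> q\<^sup>2" using Y0 dp by (intro power_mono) auto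
        then show ?thesis using Y0 dp by simp
      qed
      have dl: "8 * \<epsilon>\<^sup>2 * Y + 2 * \<epsilon> * Xs + 8 * \<epsilon> * M \<le> \<delta>"
      proof -
        have 1: "8 * \<epsilon>\<^sup>2 * Y \<le> \<delta> / 2"
        proof -
          have "16 * Y \<le> q\<^sup>2 * \<delta>" using qY dp by (simp add: divide_le_eq)
          then show ?thesis unfolding \<epsilon>_def using q0 by (simp add: field_simps power2_eq_square)
        qed
        have 2: "8 * \<epsilon> * X \<le> \<delta> / 2"
        proof -
          have "16 * X \<le> q * \<delta>" using qX dp by (simp add: divide_le_eq)
          then show ?thesis unfolding \<epsilon>_def using q0 by (simp add: field_simps)
        qed
        have "2 * \<epsilon> * Xs \<le> 8 * \<epsilon> * Xs" using eps X0 by simp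
        then show ?thesis using 1 2 unfolding X_def by (simp add: algebra_simps)
      qed
      have c: "covering_number (U \<times> S) (dA a n m) \<delta> \<noteq> \<infinity> \<and> real (the_enat (covering_number (U \<times> S) (dA a n m) \<delta>)) \<le> exp (1700 / \<epsilon>\<^sup>2)"
      proof (rule covering_le[OF symd refld])
        show "0 \<le> \<delta>" using dp by simp
        show "\<And>P. P \<subseteq> U \<times> S \<Longrightarrow> finite P \<Longrightarrow> (\<And>p p'. p \<in> P \<Longrightarrow> p' \<in> P \<Longrightarrow> p \<noteq> p' \<Longrightarrow> \<delta> / 2 < dA a n m p p') \<Longrightarrow>
              real (card P) \<le> exp (1700 / \<epsilon>\<^sup>2)"
          by (rule key[OF eps dl])
      qed
      define N where "N = real (the_enat (covering_number (U \<times> S) (dA a n m) \<delta>))"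
      have N1: "1 \<le> N" unfolding N_def using covering_ge1[OF UxS] c by simp
      have "ln N \<le> ln (exp (1700 / \<epsilon>\<^sup>2))"
        using N1 c unfolding N_def by (subst ln_le_cancel_iff) auto
      also have "\<dots> = 1700 * q\<^sup>2" unfolding \<epsilon>_def by (simp add: power_divide)
      finally have lnN: "ln N \<le> 1700 * q\<^sup>2" .
      have "sqrt (ln N) \<le> sqrt (1700 * q\<^sup>2)" using lnN by simp
      also have "\<dots> = sqrt 1700 * q" using q0 by (simp add: real_sqrt_mult)
      also have "\<dots> \<le> 42 * q"
      proof -
        have "sqrt 1700 \<le> sqrt (42\<^sup>2)" by (subst real_sqrt_le_iff) simp
        then have "sqrt 1700 \<le> 42" by simp
        then show ?thesis using q0 by (intro mult_right_mono) auto
      qed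
      also have "\<dots> \<le> 42 * (16 * X / \<delta> + 4 * (sqrt Y / sqrt \<delta>))"
      proof -
        have "sqrt (16 * Y / \<delta>) = 4 * (sqrt Y / sqrt \<delta>)"
          by (simp add: real_sqrt_mult real_sqrt_divide)
        then have "q \<le> 16 * X / \<delta> + 4 * (sqrt Y / sqrt \<delta>)"
          unfolding q_def using XX Y0 dp by (auto simp: max_def)
        then show ?thesis by simp
      qed
      also have "\<dots> \<le> 1700 * ((1 / \<delta>) * (Xs + M) + (1 / sqrt \<delta>) * sqrt Y)"
      proof -
        have a1: "0 \<le> X / \<delta>" using XX dp by simp
        have a2: "0 \<le> sqrt Y / sqrt \<delta>" using Y0 dp by simp
        have "42 * (16 * X / \<delta> + 4 * (sqrt Y / sqrt \<delta>)) = 672 * (X / \<delta>) + 168 * (sqrt Y / sqrt \<delta>)"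
          by simp
        also have "\<dots> \<le> 1700 * (X / \<delta>) + 1700 * (sqrt Y / sqrt \<delta>)" using a1 a2 by linarith
        also have "\<dots> = 1700 * ((1 / \<delta>) * (Xs + M) + (1 / sqrt \<delta>) * sqrt Y)"
          unfolding X_def by (simp add: algebra_simps)
        finally show ?thesis .
      qed
      finally show ?thesis using c unfolding N_def by simp
    qed
  qed
  have al: "(SUP t\<in>S. \<integral>g. alphaA a n m (tensor g t) \<partial>gauss n) = M"
    unfolding M_def alphaA_eq ..
  have bY: "(\<integral>g. betaAS a n m S g \<partial>gauss n) = Y" unfolding Y_def ba ..
  have bX: "(SUP x\<in>U. betaAS a n m S x) = Xs" unfolding Xs_def ba ..
  show "(\<forall>\<epsilon>>0.
        covering_number (U \<times> S) (dA a n m)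
          (8 * \<epsilon>\<^sup>2 * (\<integral>g. betaAS a n m S g \<partial>gauss n)
           + 2 * \<epsilon> * (SUP x\<in>U. betaAS a n m S x)
           + 8 * \<epsilon> * (SUP t\<in>S. \<integral>g. alphaA a n m (tensor g t) \<partial>gauss n)) \<noteq> \<infinity>
      \<and> real (the_enat (covering_number (U \<times> S) (dA a n m)
          (8 * \<epsilon>\<^sup>2 * (\<integral>g. betaAS a n m S g \<partial>gauss n)
           + 2 * \<epsilon> * (SUP x\<in>U. betaAS a n m S x)
           + 8 * \<epsilon> * (SUP t\<in>S. \<integral>g. alphaA a n m (tensor g t) \<partial>gauss n))))
         \<le> exp (1700 / \<epsilon>\<^sup>2)) \<and>
     (\<forall>\<delta>>0.
        covering_number (U \<times> S) (dA a n m) \<delta> \<noteq> \<infinity>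
      \<and> sqrt (ln (real (the_enat (covering_number (U \<times> S) (dA a n m) \<delta>))))
         \<le> 1700 * ((1 / \<delta>) * ((SUP x\<in>U. betaAS a n m S x)
                              + (SUP t\<in>S. \<integral>g. alphaA a n m (tensor g t) \<partial>gauss n))
                + (1 / sqrt \<delta>) * sqrt (\<integral>g. betaAS a n m S g \<partial>gauss n)))"
    unfolding al bY bX using part1 part2 by blast
qed


end
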